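(* Let $K$ be a kernel as in the context, and let $h_n,\varepsilon_n\to0$, $H_n\to\infty$ with $h_n\sim\exp(-n^{\vartheta_h})$ for some $\vartheta_h<1/4$, $h_n\varepsilon_n^{-1}=o(1)$ and $h_nH_n=o(1)$ (and $\varepsilon_n<1/2$, $|H_n-j|>\varepsilon_n$ for all $j\in\mathbb{Z}$). Then there is $\delta>0$ with $\log(h_n^{-1})/n^{1/(1+2\delta)}\to0$ such that, for every $c\ne0$, $j\in\mathbb{Z}\setminus\{0\}$ and $t\in\mathbb{R}$, each of the functions $g_n\in\{f^{(\lambda)}_n,f^{(\gamma)}_n,f^{(q_j)}_n,f^{(N)}_{t,n}\}$ is bounded, belongs to $L^2(\mathbb{R})$, and satisfies (i) $\int_{-h_n^{-1}}^{h_n^{-1}}|\mathcal{F}g_n(u)|du=o\big(n^{1/2}(\log h_n^{-1})^{-(1+2\delta)}\big)$, with the implicit constant not depending on $t$ (for $f^{(N)}_{t,n}$) or $j$ (for $f^{(q_j)}_n$); (ii) $\sup_n\sup_x|g_n(x)|<\infty$; (iii) $\lim_{n}g_n*K_{h_n}$ exists at every point. Moreover, pointwise on $\mathbb{R}$, $$\lim_n f^{(\lambda)}_n*K_{h_n}=\mathbf{1}_{\mathbb{R}\setminus\{0\}},\quad \lim_nf^{(\gamma)}_n*K_{h_n}=0,\quad \lim_nf^{(q_j)}_n*K_{h_n}=\mathbf{1}_{\{j\}}\ (j\in\mathbb{Z}),$$ $$l_t:=\lim_nf^{(N)}_{t,n}*K_{h_n}=\mathbf{1}_{(-\infty,t]}\mathbf{1}_{\mathbb{R}\setminus\{0\}}-\tfrac12\mathbf{1}_{\{t\}}\mathbf{1}_{\mathbb{R}\setminus\mathbb{Z}}(t).$$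 Furthermore, for a finite set $\mathcal T\subset\mathbb{R}$, constants $C_{(\lambda)},C_{(\gamma)},C_{(j)}$ ($j\in\mathbb{Z}\setminus\{0\}$), $C_t$ ($t\in\mathcal T$), and $\widetilde H_n\to\infty$, the function $$f_{t,n}:=C_{(\lambda)}f^{(\lambda)}_n+C_{(\gamma)}f^{(\gamma)}_n+\sum_{0<|j|\le\widetilde H_n}C_{(j)}f^{(q_j)}_n+\sum_{t\in\mathcal T}C_tf^{(N)}_{t,n}$$ enjoys the same properties (boundedness, $L^2$, (i)–(iii)) if either (a) only finitely many $C_{(j)}$ are nonzero, or (b) $\sup_j|C_{(j)}|<\infty$, $\widetilde H_n\sim n^{\vartheta_{\widetilde H}}$ with $\vartheta_{\widetilde H}<1/2$ and $\vartheta_h<(1-2\vartheta_{\widetilde H})/4$; in both cases $$\lim_nf_{t,n}*K_{h_n}=C_{(\lambda)}\mathbf{1}_{\mathbb{R}\setminus\{0\}}+\sum_{j\in\mathbb{Z}\setminus\{0\}}C_{(j)}\mathbf{1}_{\{j\}}+\sum_{t\in\mathcal T}C_tl_t\quad\text{pointwise}.$$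
   Context: Kernel $K$: symmetric, $\int K=1$, $\mathrm{supp}\mathcal{F}K\subseteq[-1,1]$, $|K(x)|\le C'(1+|x|)^{-\eta}$ for some $\eta>2$; $K_h=h^{-1}K(\cdot/h)$; $\mathcal{F}f(u)=\int e^{iux}f(x)dx$. $a_n\sim b_n$: mutually $\lesssim$. Functions: $f^{(\lambda)}_n=\mathbf{1}_{\{\varepsilon_n\le|x|\le H_n\}}$; $f^{(\gamma)}_n(x)=c^{-1}x\mathbf{1}_{\{|x|<h_n\}}$; $f^{(q_j)}_n=\mathbf{1}_{\{|x-j|<\varepsilon_n\}}$, $j\in\mathbb{Z}$; $f^{(N)}_{t,n}=\mathbf{1}_{[-H_n,H_n]\setminus(-\varepsilon_n,\varepsilon_n)}g_{t,n}$ with $g_{t,n}=\mathbf{1}_{(-\infty,t]}$ if $|t-j|>\varepsilon_n$ for all $j\in\mathbb{Z}$, $g_{t,n}=\mathbf{1}_{(-\infty,j-\varepsilon_n]}$ if $j-\varepsilon_n\le t<j$, $g_{t,n}=\mathbf{1}_{(-\infty,j+\varepsilon_n]}$ if $j\le t\le j+\varepsilon_n$, for some $j\in\mathbb{Z}$. *)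

theory Defs
  imports "HOL-Analysis.Analysis" "HOL-Library.Landau_Symbols"
begin

definition FT :: "(real \<Rightarrow> real) \<Rightarrow> real \<Rightarrow> complex" where
  "FT f u = (LINT x|lborel. cis (u * x) * complex_of_real (f x))"

definition Kh :: "(real \<Rightarrow> real) \<Rightarrow> real \<Rightarrow> real \<Rightarrow> real" where
  "Kh K h x = K (x / h) / h"

definition conv :: "(real \<Rightarrow> real) \<Rightarrow> (real \<Rightarrow> real) \<Rightarrow> real \<Rightarrow> real" where
  "conv f g x = (LINT y|lborel. f (x - y) * g y)"

definition f_lambda :: "real \<Rightarrow> real \<Rightarrow> real \<Rightarrow> real" where
  "f_lambda eps H x = (if eps \<le> \<bar>x\<bar> \<and> \<bar>x\<bar> \<le> H then 1 else 0)"

definition f_gamma :: "real \<Rightarrow> real \<Rightarrow> real \<Rightarrow> real" where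
  "f_gamma c h x = (if \<bar>x\<bar> < h then x / c else 0)"

definition f_q :: "int \<Rightarrow> real \<Rightarrow> real \<Rightarrow> real" where
  "f_q j eps x = (if \<bar>x - of_int j\<bar> < eps then 1 else 0)"

definition thr :: "real \<Rightarrow> real \<Rightarrow> real" where
  "thr eps t =
    (if \<exists>j::int. of_int j - eps \<le> t \<and> t < of_int j
     then of_int (SOME j::int. of_int j - eps \<le> t \<and> t < of_int j) - eps
     else if \<exists>j::int. of_int j \<le> t \<and> t \<le> of_int j + eps
     then of_int (SOME j::int. of_int j \<le> t \<and> t \<le> of_int j + eps) + eps
     else t)"

definition g_N :: "real \<Rightarrow> real \<Rightarrow> real \<Rightarrow> real" where
  "g_N eps t x = (if x \<le> thr eps t then 1 else 0)"

definition f_N :: "real \<Rightarrow> real \<Rightarrow> real \<Rightarrow> real \<Rightarrow> real" where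
  "f_N eps H t x = (if eps \<le> \<bar>x\<bar> \<and> \<bar>x\<bar> \<le> H then g_N eps t x else 0)"

definition l_lim :: "real \<Rightarrow> real \<Rightarrow> real" where
  "l_lim t x = indicator {..t} x * indicator (- {0}) x
               - 1/2 * indicator {t} x * indicator (- \<int>) t"

definition FI :: "(real \<Rightarrow> real) \<Rightarrow> real \<Rightarrow> real" where
  "FI g h = (LINT u:{-(1/h)..1/h}|lborel. cmod (FT g u))"

definition rate :: "(nat \<Rightarrow> real) \<Rightarrow> real \<Rightarrow> nat \<Rightarrow> real" where
  "rate h \<delta> n = sqrt (real n) * (ln (1 / h n)) powr (- (1 + 2 * \<delta>))"

text \<open>The properties: bounded, L^2, (i) with o-constant uniform over the index set I,
  (ii) uniform sup bound, (iii) pointwise convergence of g_n * K_{h_n}.\<close>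
definition props ::
  "(real \<Rightarrow> real) \<Rightarrow> (nat \<Rightarrow> real) \<Rightarrow> real \<Rightarrow> ('i \<Rightarrow> nat \<Rightarrow> real \<Rightarrow> real) \<Rightarrow> 'i set \<Rightarrow> bool" where
  "props K h \<delta> G I \<longleftrightarrow>
     (\<forall>i\<in>I. \<forall>n. G i n \<in> borel_measurable borel \<and> bounded (range (G i n))
                  \<and> integrable lborel (\<lambda>x. (G i n x)\<^sup>2)) \<and>
     (\<forall>e>0. eventually (\<lambda>n. \<forall>i\<in>I. FI (G i n) (h n) \<le> e * rate h \<delta> n) sequentially) \<and>
     (\<forall>i\<in>I. \<exists>B. \<forall>n x. \<bar>G i n x\<bar> \<le> B) \<and>
     (\<forall>i\<in>I. \<forall>x. convergent (\<lambda>n. conv (G i n) (Kh K (h n)) x))"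

definition f_comb ::
  "real \<Rightarrow> real \<Rightarrow> real \<Rightarrow> (int \<Rightarrow> real) \<Rightarrow> real set \<Rightarrow> (real \<Rightarrow> real) \<Rightarrow> real
   \<Rightarrow> real \<Rightarrow> real \<Rightarrow> real \<Rightarrow> real \<Rightarrow> real" where
  "f_comb c Cl Cg Cj T Ct eps H h Ht x =
     Cl * f_lambda eps H x + Cg * f_gamma c h x
     + (\<Sum>j\<in>{j::int. 0 < \<bar>j\<bar> \<and> of_int \<bar>j\<bar> \<le> Ht}. Cj j * f_q j eps x)
     + (\<Sum>t\<in>T. Ct t * f_N eps H t x)"

end

theory Submission
  imports Defs
begin


lemma conv_subst:
  assumes h: "h > 0"
  shows "conv g (Kh K h) x = (LINT z|lborel. g (x - h*z) * K z)"
proof -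
  have "conv g (Kh K h) x = (LINT y|lborel. g (x - y) * (K (y/h) / h))"
    by (simp add: conv_def Kh_def)
  also have "\<dots> = \<bar>h\<bar> *\<^sub>R (LINT z|lborel. g (x - (0 + h*z)) * (K ((0 + h*z)/h) / h))"
    using h by (intro lborel_integral_real_affine) simp
  also have "\<dots> = h * (LINT z|lborel. (g (x - h*z) * K z) / h)"
    using h by simp
  also have "\<dots> = (LINT z|lborel. g (x - h*z) * K z)"
    using h by simp
  finally show ?thesis .
qed

lemma half_integral:
  fixes K :: "real \<Rightarrow> real"
  assumes Kint: "integrable lborel K" and sym: "\<forall>x. K (- x) = K x"
    and one: "(LINT x|lborel. K x) = 1"
  shows "(LINT z|lborel. (if z > 0 then a else b) * K z) = (a + b) / 2"
proof -
  have m: "K \<in> borel_measurable lborel" using Kint by (simp add: borel_measurable_integrable)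
  have mb[measurable]: "K \<in> borel_measurable borel" using m by (simp add: measurable_cong_sets[OF sets_lborel refl])
  have mif: "(\<lambda>z. (if 0 < z then a else b) * K z) \<in> borel_measurable borel" by measurable
  define P where "P = (LINT z|lborel. K z * indicator {0<..} z)"
  define N where "N = (LINT z|lborel. K z * indicator {..<0} z)"
  have iP: "integrable lborel (\<lambda>z. K z * indicator {0<..} z)"
    using Kint by (intro integrable_real_mult_indicator) auto
  have iN: "integrable lborel (\<lambda>z. K z * indicator {..<0} z)"
    using Kint by (intro integrable_real_mult_indicator) auto
  have "N = \<bar>-1\<bar> *\<^sub>R (LINT z|lborel. K (0 + (-1)*z) * indicator {..<0} (0 + (-1)*z))"
    unfolding N_def by (intro lborel_integral_real_affine) simp
  also have "\<dots> = P" unfolding P_def using sym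
    by (simp add: indicator_def)
  finally have NP: "N = P" .
  have ae: "AE z in lborel. z \<noteq> 0" by (rule AE_lborel_singleton)
  have "1 = (LINT z|lborel. K z * indicator {0<..} z + K z * indicator {..<0} z)"
    unfolding one[symmetric] using ae
    by (intro integral_cong_AE m borel_measurable_integrable[OF Bochner_Integration.integrable_add[OF iP iN]]) (auto simp: indicator_def)
  also have "\<dots> = P + N" using iP iN unfolding P_def N_def by simp
  finally have P: "P = 1/2" using NP by simp
  have "(LINT z|lborel. (if z > 0 then a else b) * K z)
      = (LINT z|lborel. a * (K z * indicator {0<..} z) + b * (K z * indicator {..<0} z))"
    using ae by (intro integral_cong_AE borel_measurable_integrable[OF Bochner_Integration.integrable_add[OF Bochner_Integration.integrable_mult_right[OF iP] Bochner_Integration.integrable_mult_right[OF iN]]]) (auto simp: indicator_def m mif)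
  also have "\<dots> = a * P + b * N" using iP iN unfolding P_def N_def by simp
  finally show ?thesis using P NP by simp
qed

lemma conv_DCT:
  fixes K :: "real \<Rightarrow> real" and g :: "nat \<Rightarrow> real \<Rightarrow> real" and h :: "nat \<Rightarrow> real"
  assumes Kint: "integrable lborel K" and sym: "\<forall>x. K (- x) = K x"
    and one: "(LINT x|lborel. K x) = 1"
    and hpos: "\<forall>n. h n > 0"
    and gm: "\<And>n. g n \<in> borel_measurable borel" and gb: "\<And>n y. \<bar>g n y\<bar> \<le> B"
    and pos: "\<And>z. z > 0 \<Longrightarrow> (\<lambda>n. g n (x - h n * z)) \<longlonglongrightarrow> a"
    and neg: "\<And>z. z < 0 \<Longrightarrow> (\<lambda>n. g n (x - h n * z)) \<longlonglongrightarrow> b"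
  shows "(\<lambda>n. conv (g n) (Kh K (h n)) x) \<longlonglongrightarrow> (a + b) / 2"
proof -
  have m: "K \<in> borel_measurable lborel" using Kint by (simp add: borel_measurable_integrable)
  have mb[measurable]: "K \<in> borel_measurable borel" using m by (simp add: measurable_cong_sets[OF sets_lborel refl])
  have eq: "conv (g n) (Kh K (h n)) x = (LINT z|lborel. g n (x - h n*z) * K z)" for n
    using hpos by (intro conv_subst) auto
  have "(\<lambda>n. (LINT z|lborel. g n (x - h n*z) * K z)) \<longlonglongrightarrow> (LINT z|lborel. (if z > 0 then a else b) * K z)"
  proof (rule integral_dominated_convergence[where w="\<lambda>z. B * \<bar>K z\<bar>"])
    show "(\<lambda>z. (if z > 0 then a else b) * K z) \<in> borel_measurable lborel" by measurable
    show "(\<lambda>z. g n (x - h n*z) * K z) \<in> borel_measurable lborel" for n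
    proof -
      have [measurable]: "g n \<in> borel_measurable borel" by (rule gm)
      show ?thesis by measurable
    qed
    show "integrable lborel (\<lambda>z. B * \<bar>K z\<bar>)" using Kint by simp
    show "AE z in lborel. (\<lambda>n. g n (x - h n*z) * K z) \<longlonglongrightarrow> (if z > 0 then a else b) * K z"
      using AE_lborel_singleton[of 0]
    proof eventually_elim
      case (elim z)
      show ?case
      proof (cases "z > 0")
        case True then show ?thesis using pos[of z] by (auto intro: tendsto_mult)
      next
        case False then have "z < 0" using elim by simp
        then show ?thesis using False neg[of z] by (auto intro: tendsto_mult)
      qed
    qed
    show "AE z in lborel. norm (g n (x - h n*z) * K z) \<le> B * \<bar>K z\<bar>" for n
      using gb by (auto simp: abs_mult intro!: mult_right_mono)
  qed
  then show ?thesis using half_integral[OF Kint sym one, of a b] eq by simp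
qed


definition beta :: "real \<Rightarrow> real \<Rightarrow> real" where
  "beta L u = 4 * L / (2 + L * \<bar>u\<bar>)"

lemma cis_integral:
  assumes "a \<le> b"
  shows "((\<lambda>x. cis (u*x)) has_integral integral {a..b} (\<lambda>x. cis (u*x))) {a..b}"
    "cmod (integral {a..b} (\<lambda>x. cis (u*x))) \<le> b - a"
    "u \<noteq> 0 \<Longrightarrow> cmod (integral {a..b} (\<lambda>x. cis (u*x))) \<le> 2 / \<bar>u\<bar>"
proof -
  have c: "continuous_on {a..b} (\<lambda>x. cis (u*x))" by (intro continuous_intros)
  show hi: "((\<lambda>x. cis (u*x)) has_integral integral {a..b} (\<lambda>x. cis (u*x))) {a..b}"
    using integrable_continuous_real[OF c] by (simp add: integrable_integral)
  show "cmod (integral {a..b} (\<lambda>x. cis (u*x))) \<le> b - a"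
    using has_integral_bound[of 1 "\<lambda>x. cis (u*x)" "integral {a..b} (\<lambda>x. cis (u*x))" a b] hi assms by simp
  assume u: "u \<noteq> 0"
  define F where "F x = (- \<i> / complex_of_real u) * cis (u*x)" for x
  have "(F has_vector_derivative cis (u*x)) (at x within {a..b})" for x
  proof -
    have "((\<lambda>x. cis (u*x)) has_vector_derivative (u *\<^sub>R (\<i> * cis (u*x)))) (at x within {a..b})"
      unfolding has_vector_derivative_def
      by (rule has_derivative_eq_rhs, rule has_derivative_cis, rule derivative_eq_intros, auto)
    then have "((\<lambda>x. (- \<i> / complex_of_real u) * cis (u*x)) has_vector_derivative
        (- \<i> / complex_of_real u) * (u *\<^sub>R (\<i> * cis (u*x)))) (at x within {a..b})"
      by (intro has_vector_derivative_mult_right)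
    moreover have "(- \<i> / complex_of_real u) * (u *\<^sub>R (\<i> * cis (u*x))) = cis (u*x)"
      using u by (simp add: scaleR_conv_of_real field_simps)
    ultimately show ?thesis unfolding F_def by simp
  qed
  then have "((\<lambda>x. cis (u*x)) has_integral (F b - F a)) {a..b}"
    using assms by (intro fundamental_theorem_of_calculus) auto
  then have "integral {a..b} (\<lambda>x. cis (u*x)) = F b - F a" by (rule integral_unique)
  also have "cmod (F b - F a) \<le> 2 / \<bar>u\<bar>"
  proof -
    have "F b - F a = (- \<i> / complex_of_real u) * (cis (u*b) - cis (u*a))"
      unfolding F_def by (simp add: algebra_simps)
    then have "cmod (F b - F a) = cmod (cis (u*b) - cis (u*a)) / \<bar>u\<bar>"
      by (simp add: norm_mult norm_divide)
    also have "cmod (cis (u*b) - cis (u*a)) \<le> 2"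
      using norm_triangle_ineq4[of "cis (u*b)" "cis (u*a)"] by simp
    finally show ?thesis using u by (simp add: divide_right_mono)
  qed
  finally show "cmod (integral {a..b} (\<lambda>x. cis (u*x))) \<le> 2 / \<bar>u\<bar>" .
qed

lemma beta_ge:
  assumes L: "0 < L" and l: "0 \<le> l" "l \<le> L" and u: "u \<noteq> 0 \<Longrightarrow> l \<le> 2 / \<bar>u\<bar>"
  shows "l \<le> beta L u"
proof (cases "L * \<bar>u\<bar> \<le> 2")
  case True
  have d: "0 < 2 + L * \<bar>u\<bar>" using L by (simp add: add_pos_nonneg)
  have "L * (2 + L * \<bar>u\<bar>) \<le> L * 4" using True L by (intro mult_left_mono) auto
  then have "L \<le> 4 * L / (2 + L * \<bar>u\<bar>)" using d by (simp add: pos_le_divide_eq mult.commute)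
  then show ?thesis using l unfolding beta_def by simp
next
  case False
  then have u0: "u \<noteq> 0" by auto
  have d: "0 < 2 + L * \<bar>u\<bar>" using L by (simp add: add_pos_nonneg)
  have "2 / \<bar>u\<bar> = 4 * L / (2 * L * \<bar>u\<bar>)" using L u0 by simp
  also have "\<dots> \<le> 4 * L / (2 + L * \<bar>u\<bar>)" using False L d
    by (intro divide_left_mono) auto
  finally have "2 / \<bar>u\<bar> \<le> 4 * L / (2 + L * \<bar>u\<bar>)" .
  then show ?thesis using u[OF u0] unfolding beta_def by simp
qed

lemma FT_interval:
  assumes S: "S \<in> sets borel" "{a<..<b} \<subseteq> S" "S \<subseteq> {a..b}" and L: "0 < L" "b - a \<le> L"
  shows "cmod (FT (indicator S) u) \<le> beta L u"
proof (cases "a \<le> b")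
  case False
  then have "S = {}" using S by auto
  then show ?thesis using L by (simp add: FT_def beta_def)
next
  case True
  have [measurable]: "S \<in> sets borel" by fact
  have [measurable]: "S \<in> sets lborel" using S by simp
  have [measurable]: "(\<lambda>x. cis (u*x)) \<in> borel_measurable borel"
    by (intro borel_measurable_continuous_onI continuous_intros)
  have ae: "AE x in lborel. x \<noteq> a \<and> x \<noteq> b"
    using AE_lborel_singleton[of a] AE_lborel_singleton[of b] by eventually_elim auto
  have "FT (indicator S) u = (LINT x|lborel. indicator {a..b} x *\<^sub>R cis (u*x))"
    unfolding FT_def
  proof (rule integral_cong_AE)
    show "(\<lambda>x. cis (u * x) * complex_of_real (indicator S x)) \<in> borel_measurable lborel" by measurable
    show "(\<lambda>x. indicator {a..b} x *\<^sub>R cis (u * x)) \<in> borel_measurable lborel" by measurable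
    show "AE x in lborel. cis (u * x) * complex_of_real (indicator S x) = indicator {a..b} x *\<^sub>R cis (u * x)"
      using ae
    proof eventually_elim
      case (elim x) then show ?case using S by (auto simp: indicator_def)
    qed
  qed
  also have "\<dots> = integral {a..b} (\<lambda>x. cis (u*x))"
  proof -
    have si: "set_integrable lborel {a..b} (\<lambda>x. cis (u*x))" unfolding set_integrable_def
      by (rule borel_integrable_compact) (auto intro!: continuous_intros)
    show ?thesis using set_borel_integral_eq_integral(2)[OF si] unfolding set_lebesgue_integral_def .
  qed
  finally have eq: "FT (indicator S) u = integral {a..b} (\<lambda>x. cis (u*x))" .
  have c2: "cmod (integral {a..b} (\<lambda>x. cis (u*x))) \<le> b - a" by (rule cis_integral(2)[OF True])
  have c3: "u \<noteq> 0 \<Longrightarrow> cmod (integral {a..b} (\<lambda>x. cis (u*x))) \<le> 2 / \<bar>u\<bar>" by (rule cis_integral(3)[OF True])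
  show ?thesis unfolding eq
    by (rule beta_ge[OF L(1) norm_ge_zero order_trans[OF c2 L(2)] c3])
qed


lemma beta_has_integral:
  assumes L: "0 < L" and T: "0 \<le> T"
  shows "(beta L has_integral 8 * ln (1 + L * T / 2)) {-T..T}"
proof -
  have d1: "0 < 2 + L * u" if "0 \<le> u" for u using L that by (simp add: add_pos_nonneg)
  have d2: "0 < 2 - L * u" if "u \<le> 0" for u using L that
    by (smt (verit, best) mult_nonneg_nonpos)
  have i1: "(beta L has_integral (4 * ln (2 + L * T) - 4 * ln (2 + L * 0))) {0..T}"
  proof (rule fundamental_theorem_of_calculus[OF T])
    fix u assume u: "u \<in> {0..T}"
    have "((\<lambda>u. 4 * ln (2 + L * u)) has_real_derivative (4 * (L / (2 + L * u)))) (at u within {0..T})"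
      using d1[of u] u by (auto intro!: derivative_eq_intros)
    moreover have "4 * (L / (2 + L * u)) = beta L u" using u by (simp add: beta_def)
    ultimately show "((\<lambda>u. 4 * ln (2 + L * u)) has_vector_derivative beta L u) (at u within {0..T})"
      by (simp add: has_real_derivative_iff_has_vector_derivative)
  qed
  have i2: "(beta L has_integral ((- 4 * ln (2 - L * 0)) - (- 4 * ln (2 - L * (-T))))) {-T..0}"
  proof (rule fundamental_theorem_of_calculus)
    show "-T \<le> 0" using T by simp
    fix u assume u: "u \<in> {-T..0}"
    have "((\<lambda>u. - 4 * ln (2 - L * u)) has_real_derivative (- 4 * ((- L) / (2 - L * u)))) (at u within {-T..0})"
      using d2[of u] u by (auto intro!: derivative_eq_intros)
    moreover have "- 4 * ((- L) / (2 - L * u)) = beta L u" using u by (simp add: beta_def)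
    ultimately show "((\<lambda>u. - 4 * ln (2 - L * u)) has_vector_derivative beta L u) (at u within {-T..0})"
      by (simp add: has_real_derivative_iff_has_vector_derivative)
  qed
  have "(beta L has_integral ((- 4 * ln (2 - L * 0)) - (- 4 * ln (2 - L * (-T))))
        + (4 * ln (2 + L * T) - 4 * ln (2 + L * 0))) {-T..T}"
    by (rule has_integral_combine[OF _ _ i2 i1]) (use T in auto)
  moreover have "((- 4 * ln (2 - L * 0)) - (- 4 * ln (2 - L * (-T))))
        + (4 * ln (2 + L * T) - 4 * ln (2 + L * 0)) = 8 * (ln (2 + L * T) - ln 2)" by simp
  moreover have "ln (2 + L * T) - ln 2 = ln (1 + L * T / 2)"
  proof -
    have e: "1 + L * T / 2 = (2 + L * T) / 2" by (simp add: field_simps)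
    have "ln ((2 + L * T) / 2) = ln (2 + L * T) - ln 2" by (rule ln_divide_pos) (use d1[OF T] in auto)
    then show ?thesis unfolding e by simp
  qed
  ultimately show ?thesis by (simp add: right_diff_distrib[symmetric])
qed

lemma FI_bound:
  assumes h: "h > 0" and L: "L > 0" and M: "M \<ge> 0" and C: "C \<ge> 0"
    and bnd: "\<And>u. u \<in> {-(1/h)..1/h} \<Longrightarrow> cmod (FT g u) \<le> M * beta L u + C"
  shows "FI g h \<le> 8 * M * ln (1 + L / (2 * h)) + 2 * C / h"
proof -
  define T where "T = 1 / h"
  have T: "T \<ge> 0" using h by (simp add: T_def)
  have pos: "2 + L * \<bar>x\<bar> \<noteq> 0" for x
  proof -
    have "0 \<le> L * \<bar>x\<bar>" using L by simp
    then show ?thesis by linarith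
  qed
  have cont: "continuous_on {-T..T} (\<lambda>u. M * beta L u + C)"
    unfolding beta_def using pos
    by (intro continuous_intros) auto
  have hi: "((\<lambda>u. M * beta L u + C) has_integral (M * (8 * ln (1 + L * T / 2)) + C * (T - (-T)))) {-T..T}"
    by (intro has_integral_add has_integral_mult_right beta_has_integral L T)
       (use has_integral_const_real[of C "-T" T] T in \<open>simp add: mult_ac\<close>)
  have si: "set_integrable lborel {-T..T} (\<lambda>u. M * beta L u + C)"
    unfolding set_integrable_def by (rule borel_integrable_compact[OF _ cont]) auto
  have val: "(LINT u:{-T..T}|lborel. M * beta L u + C) = M * (8 * ln (1 + L * T / 2)) + C * (T - (-T))"
    using set_borel_integral_eq_integral(2)[OF si] integral_unique[OF hi] by simp
  have eqv: "M * (8 * ln (1 + L * T / 2)) + C * (T - (-T)) = 8 * M * ln (1 + L / (2 * h)) + 2 * C / h"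
    unfolding T_def by (simp add: mult_ac)
  have nonneg: "0 \<le> 8 * M * ln (1 + L / (2 * h)) + 2 * C / h"
    using h L M C by (intro add_nonneg_nonneg mult_nonneg_nonneg) auto
  show ?thesis
  proof (cases "set_integrable lborel {-T..T} (\<lambda>u. cmod (FT g u))")
    case True
    have "FI g h = (LINT u:{-T..T}|lborel. cmod (FT g u))" unfolding FI_def T_def by simp
    also have "\<dots> \<le> (LINT u:{-T..T}|lborel. M * beta L u + C)"
      by (rule set_integral_mono[OF True si]) (use bnd in \<open>auto simp: T_def\<close>)
    finally show ?thesis using val eqv by simp
  next
    case False
    have "FI g h = (LINT u:{-T..T}|lborel. cmod (FT g u))" unfolding FI_def T_def by simp
    also have "\<dots> = 0" using False
      by (simp add: set_lebesgue_integral_def set_integrable_def not_integrable_integral_eq)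
    finally show ?thesis using nonneg by simp
  qed
qed


definition nice :: "(real \<Rightarrow> real) \<Rightarrow> bool" where
  "nice g \<longleftrightarrow> g \<in> borel_measurable borel \<and> (\<exists>B R. 0 \<le> B \<and> 0 \<le> R \<and> (\<forall>x. \<bar>g x\<bar> \<le> B * indicator {-R..R} x))"

lemma cis_meas[measurable]: "(\<lambda>x. cis (u*x)) \<in> borel_measurable borel"
  by (intro borel_measurable_continuous_onI continuous_intros)

lemma integrable_box: "integrable lborel (\<lambda>x::real. B * indicator {-R..R} x :: real)"
proof -
  have "integrable lborel (\<lambda>x. indicator {-R..R} x *\<^sub>R B)"
    using borel_integrable_compact[of "{-R..R}" "\<lambda>x. B"] by auto
  then show ?thesis by (simp add: mult.commute)
qed

lemma integral_box: "(R::real) \<ge> 0 \<Longrightarrow> (LINT x|lborel. B * indicator {-R..R} x :: real) = 2 * B * R"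
  by simp

lemma nice_integrable:
  assumes "nice g" shows "integrable lborel g"
proof -
  obtain B R where b: "\<And>x. \<bar>g x\<bar> \<le> B * indicator {-R..R} x" and m: "g \<in> borel_measurable borel"
    and B: "0 \<le> B"
    using assms unfolding nice_def by blast
  have "\<bar>g x\<bar> \<le> \<bar>B * indicator {-R..R} x\<bar>" for x using b[of x] by linarith
  then show ?thesis
    by (intro Bochner_Integration.integrable_bound[OF integrable_box[of B R]]) (use m in auto)
qed

lemma nice_integrable_cis:
  assumes "nice g" shows "integrable lborel (\<lambda>x. cis (u*x) * complex_of_real (g x))"
proof -
  have m[measurable]: "g \<in> borel_measurable borel" using assms unfolding nice_def by blast
  show ?thesis
    by (rule Bochner_Integration.integrable_bound[OF nice_integrable[OF assms]])
       (auto simp: norm_mult)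
qed

lemma nice_sq:
  assumes "nice g" shows "integrable lborel (\<lambda>x. (g x)\<^sup>2)" "bounded (range g)"
proof -
  obtain B R where b: "\<And>x. \<bar>g x\<bar> \<le> B * indicator {-R..R} x" and m[measurable]: "g \<in> borel_measurable borel"
    and B0: "0 \<le> B"
    using assms unfolding nice_def by blast
  have ib: "B * indicator {-R..R} x \<le> B" for x using B0 by (cases "x \<in> {-R..R}") auto
  have bb: "\<bar>g x\<bar> \<le> B" for x using order_trans[OF b[of x] ib[of x]] .
  have "\<bar>g x\<bar> * \<bar>g x\<bar> \<le> B * (B * indicator {-R..R} x)" for x
    using mult_mono[OF bb[of x] b[of x]] B0 by simp
  then have "norm ((g x)\<^sup>2) \<le> norm (B * (B * indicator {-R..R} x))" for x
    using B0 by (simp add: power2_eq_square abs_mult)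
  then show "integrable lborel (\<lambda>x. (g x)\<^sup>2)"
    by (intro Bochner_Integration.integrable_bound[OF integrable_box[of "B*B" R]]) (auto simp: mult.assoc)
  show "bounded (range g)" unfolding bounded_iff using bb by auto
qed

lemma nice_add: "nice f \<Longrightarrow> nice g \<Longrightarrow> nice (\<lambda>x. f x + g x)"
proof -
  assume f: "nice f" and g: "nice g"
  obtain B1 R1 where b1: "\<And>x. \<bar>f x\<bar> \<le> B1 * indicator {-R1..R1} x" and [measurable]: "f \<in> borel_measurable borel"
    and B1: "0 \<le> B1" "0 \<le> R1"
    using f unfolding nice_def by blast
  obtain B2 R2 where b2: "\<And>x. \<bar>g x\<bar> \<le> B2 * indicator {-R2..R2} x" and [measurable]: "g \<in> borel_measurable borel"
    and B2: "0 \<le> B2" "0 \<le> R2"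
    using g unfolding nice_def by blast
  have "\<bar>f x + g x\<bar> \<le> (B1 + B2) * indicator {-max R1 R2..max R1 R2} x" for x
  proof -
    have "\<bar>f x + g x\<bar> \<le> B1 * indicator {-R1..R1} x + B2 * indicator {-R2..R2} x"
      using b1[of x] b2[of x] by linarith
    also have "\<dots> \<le> (B1 + B2) * indicator {-max R1 R2..max R1 R2} x"
      using B1 B2 by (auto simp: indicator_def)
    finally show ?thesis .
  qed
  then show ?thesis unfolding nice_def using B1 B2
    by (intro conjI, measurable) (rule exI[of _ "B1+B2"], rule exI[of _ "max R1 R2"], auto)
qed

lemma nice_cmult: "nice g \<Longrightarrow> nice (\<lambda>x. c * g x)"
proof -
  assume g: "nice g"
  obtain B R where b: "\<And>x. \<bar>g x\<bar> \<le> B * indicator {-R..R} x" and [measurable]: "g \<in> borel_measurable borel"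
    and B: "0 \<le> B" "0 \<le> R"
    using g unfolding nice_def by blast
  have "\<bar>c * g x\<bar> \<le> (\<bar>c\<bar> * B) * indicator {-R..R} x" for x
    using mult_left_mono[OF b[of x], of "\<bar>c\<bar>"] by (simp add: abs_mult mult.assoc)
  then show ?thesis unfolding nice_def using B
    by (intro conjI, measurable) (rule exI[of _ "\<bar>c\<bar> * B"], rule exI[of _ R], auto)
qed

lemma nice_zero: "nice (\<lambda>x. 0)"
  unfolding nice_def by (intro conjI, measurable) (rule exI[of _ 0], rule exI[of _ 0], auto)

lemma nice_sum: "finite I \<Longrightarrow> (\<And>i. i \<in> I \<Longrightarrow> nice (f i)) \<Longrightarrow> nice (\<lambda>x. \<Sum>i\<in>I. f i x)"
proof (induction I rule: finite_induct)
  case empty then show ?case by (simp add: nice_zero)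
next
  case (insert a I)
  then show ?case by (simp add: nice_add)
qed

lemma nice_interval:
  assumes "S \<in> sets borel" "S \<subseteq> {a..b}"
  shows "nice (indicator S)"
proof -
  define M where "M = max \<bar>a\<bar> \<bar>b\<bar>"
  have "\<bar>indicator S x :: real\<bar> \<le> 1 * indicator {-M..M} x" for x
  proof (cases "x \<in> S")
    case True then have ab: "a \<le> x" "x \<le> b" using assms(2) by auto
    have "-\<bar>a\<bar> \<le> a" "b \<le> \<bar>b\<bar>" "\<bar>a\<bar> \<le> M" "\<bar>b\<bar> \<le> M" by (auto simp: M_def)
    then have "x \<in> {-M..M}" using ab by auto
    then show ?thesis using True by simp
  next
    case False then show ?thesis by simp
  qed
  then show ?thesis unfolding nice_def using assms(1)
    by (intro conjI, measurable) (rule exI[of _ 1], rule exI[of _ M], auto simp: M_def)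
qed

lemma FT_add: "nice f \<Longrightarrow> nice g \<Longrightarrow> FT (\<lambda>x. f x + g x) u = FT f u + FT g u"
  unfolding FT_def
  by (simp add: distrib_left Bochner_Integration.integral_add nice_integrable_cis)

lemma FT_cmult: "FT (\<lambda>x. c * g x) u = complex_of_real c * FT g u"
  unfolding FT_def by (simp add: mult.left_commute)

lemma FT_sum: "finite I \<Longrightarrow> (\<And>i. i \<in> I \<Longrightarrow> nice (f i)) \<Longrightarrow> FT (\<lambda>x. \<Sum>i\<in>I. f i x) u = (\<Sum>i\<in>I. FT (f i) u)"
proof (induction I rule: finite_induct)
  case empty then show ?case by (simp add: FT_def)
next
  case (insert a I)
  have "FT (\<lambda>x. \<Sum>i\<in>insert a I. f i x) u = FT (\<lambda>x. f a x + (\<Sum>i\<in>I. f i x)) u"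
    using insert by simp
  also have "\<dots> = FT (f a) u + FT (\<lambda>x. \<Sum>i\<in>I. f i x) u"
    using insert by (intro FT_add nice_sum) auto
  finally show ?case using insert by simp
qed

lemma FT_box_bound:
  assumes m: "g \<in> borel_measurable borel" and b: "\<And>x. \<bar>g x\<bar> \<le> B * indicator {-R..R} x" and R: "R \<ge> 0"
  shows "cmod (FT g u) \<le> 2 * B * R"
proof -
  have B: "0 \<le> B" using b[of 0] R by (simp add: indicator_def)
  have ng: "nice g" unfolding nice_def using m b B R by blast
  have "cmod (FT g u) \<le> (LINT x|lborel. norm (cis (u*x) * complex_of_real (g x)))"
    unfolding FT_def by (rule integral_norm_bound)
  also have "\<dots> = (LINT x|lborel. \<bar>g x\<bar>)" by (simp add: norm_mult)
  also have "\<dots> \<le> (LINT x|lborel. B * indicator {-R..R} x)"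
    by (intro integral_mono integrable_box b Bochner_Integration.integrable_abs nice_integrable ng)
  also have "\<dots> = 2 * B * R" using R by simp
  finally show ?thesis .
qed


lemma f_lambda_eq:
  assumes "eps > 0"
  shows "f_lambda eps H = (\<lambda>x. indicator {-H..-eps} x + indicator {eps..H} x)"
  using assms by (auto simp: f_lambda_def indicator_def fun_eq_iff abs_if)

lemma f_q_eq: "f_q j eps = indicator {of_int j - eps<..<of_int j + eps}"
  by (auto simp: f_q_def indicator_def fun_eq_iff abs_if)

lemma f_N_eq:
  assumes "eps > 0"
  shows "f_N eps H t = (\<lambda>x. indicator {-H..min (-eps) (thr eps t)} x + indicator {eps..min H (thr eps t)} x)"
  using assms by (auto simp: f_N_def g_N_def indicator_def fun_eq_iff abs_if)


lemma f_gamma_bound: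
  assumes "c \<noteq> 0" "h > 0" shows "\<bar>f_gamma c h x\<bar> \<le> (h / \<bar>c\<bar>) * indicator {-h..h} x"
proof (cases "\<bar>x\<bar> < h")
  case True
  then have "x \<in> {-h..h}" by auto
  moreover have "\<bar>x / c\<bar> \<le> h / \<bar>c\<bar>" unfolding abs_divide
    using True assms by (intro divide_right_mono) auto
  ultimately show ?thesis using True by (simp add: f_gamma_def)
next
  case False
  then show ?thesis using assms by (simp add: f_gamma_def)
qed

lemma f_gamma_meas[measurable]: "f_gamma c h \<in> borel_measurable borel"
  unfolding f_gamma_def by measurable

lemma nice_f_gamma: "c \<noteq> 0 \<Longrightarrow> h > 0 \<Longrightarrow> nice (f_gamma c h)"
  unfolding nice_def using f_gamma_bound
  by (intro conjI, measurable) (rule exI[of _ "h / \<bar>c\<bar>"], rule exI[of _ h], auto)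

lemma FT_f_gamma: "c \<noteq> 0 \<Longrightarrow> h > 0 \<Longrightarrow> cmod (FT (f_gamma c h) u) \<le> 2 * (h / \<bar>c\<bar>) * h"
  by (rule FT_box_bound[OF f_gamma_meas f_gamma_bound]) auto



lemma FT_f_lambda:
  assumes "eps > 0" shows "cmod (FT (f_lambda eps H) u) \<le> 2 * beta (\<bar>H\<bar> + 1) u"
proof -
  have n1: "nice (indicator {-H..-eps})" by (rule nice_interval[of _ "-H" "-eps"]) auto
  have n2: "nice (indicator {eps..H})" by (rule nice_interval[of _ eps H]) auto
  have e: "FT (f_lambda eps H) u = FT (indicator {-H..-eps}) u + FT (indicator {eps..H}) u"
    using FT_add[OF n1 n2, of u] f_lambda_eq[OF assms] by simp
  have b1: "cmod (FT (indicator {-H..-eps}) u) \<le> beta (\<bar>H\<bar> + 1) u"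
    by (rule FT_interval[of _ "-H" "-eps"]) (use assms in auto)
  have b2: "cmod (FT (indicator {eps..H}) u) \<le> beta (\<bar>H\<bar> + 1) u"
    by (rule FT_interval[of _ eps H]) (use assms in auto)
  show ?thesis unfolding e using norm_triangle_ineq[of "FT (indicator {-H..-eps}) u" "FT (indicator {eps..H}) u"] b1 b2
    by simp
qed

lemma FT_f_q:
  assumes "eps > 0" "eps < 1/2" shows "cmod (FT (f_q j eps) u) \<le> beta (\<bar>H\<bar> + 1) u"
proof -
  have "cmod (FT (indicator {of_int j - eps<..<of_int j + eps}) u) \<le> beta (\<bar>H\<bar> + 1) u"
    by (rule FT_interval[of _ "of_int j - eps" "of_int j + eps"]) (use assms in auto)
  then show ?thesis by (simp only: f_q_eq)
qed

lemma FT_f_N: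
  assumes "eps > 0" shows "cmod (FT (f_N eps H t) u) \<le> 2 * beta (\<bar>H\<bar> + 1) u"
proof -
  define m1 where "m1 = min (-eps) (thr eps t)"
  define m2 where "m2 = min H (thr eps t)"
  have m: "m1 \<le> -eps" "m2 \<le> H" unfolding m1_def m2_def by auto
  have n1: "nice (indicator {-H..m1})" by (rule nice_interval[of _ "-H" m1]) auto
  have n2: "nice (indicator {eps..m2})" by (rule nice_interval[of _ eps m2]) auto
  have e: "FT (f_N eps H t) u = FT (indicator {-H..m1}) u + FT (indicator {eps..m2}) u"
    using FT_add[OF n1 n2, of u] f_N_eq[OF assms] unfolding m1_def m2_def by simp
  have b1: "cmod (FT (indicator {-H..m1}) u) \<le> beta (\<bar>H\<bar> + 1) u"
    by (rule FT_interval[of _ "-H" m1]) (use assms m in auto)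
  have b2: "cmod (FT (indicator {eps..m2}) u) \<le> beta (\<bar>H\<bar> + 1) u"
    by (rule FT_interval[of _ eps m2]) (use assms m in auto)
  show ?thesis unfolding e using norm_triangle_ineq[of "FT (indicator {-H..m1}) u" "FT (indicator {eps..m2}) u"] b1 b2
    by simp
qed

lemma nice_f_lambda: "eps > 0 \<Longrightarrow> nice (f_lambda eps H)"
proof -
  assume a: "eps > 0"
  have n1: "nice (indicator {-H..-eps})" by (rule nice_interval[of _ "-H" "-eps"]) auto
  have n2: "nice (indicator {eps..H})" by (rule nice_interval[of _ eps H]) auto
  show ?thesis using nice_add[OF n1 n2] f_lambda_eq[OF a] by simp
qed

lemma nice_f_q: "nice (f_q j eps)"
proof -
  have "nice (indicator {of_int j - eps<..<of_int j + eps})"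
    by (rule nice_interval[of _ "of_int j - eps" "of_int j + eps"]) auto
  then show ?thesis by (simp only: f_q_eq)
qed

lemma nice_f_N: "eps > 0 \<Longrightarrow> nice (f_N eps H t)"
proof -
  assume a: "eps > 0"
  define m1 where "m1 = min (-eps) (thr eps t)"
  define m2 where "m2 = min H (thr eps t)"
  have n1: "nice (indicator {-H..m1})" by (rule nice_interval[of _ "-H" m1]) auto
  have n2: "nice (indicator {eps..m2})" by (rule nice_interval[of _ eps m2]) auto
  show ?thesis using nice_add[OF n1 n2] f_N_eq[OF a] unfolding m1_def m2_def by simp
qed


lemma powr_small_eventually:
  assumes s: "s < 1/2" and e: "e > 0"
  shows "eventually (\<lambda>n. real n powr s \<le> e * sqrt (real n)) sequentially"
proof -
  have "((\<lambda>n. real n powr (s - 1/2)) \<longlongrightarrow> 0) sequentially"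
    using s by (intro tendsto_neg_powr filterlim_real_sequentially) auto
  then have "eventually (\<lambda>n. real n powr (s - 1/2) < e) sequentially"
    using e by (rule order_tendstoD)
  moreover have "eventually (\<lambda>n::nat. n \<ge> 1) sequentially" by (rule eventually_ge_at_top)
  ultimately show ?thesis
  proof eventually_elim
    case (elim n)
    then have n: "real n > 0" by simp
    have "real n powr s = real n powr (s - 1/2) * real n powr (1/2)"
      by (simp add: powr_add[symmetric])
    also have "\<dots> \<le> e * real n powr (1/2)"
      using elim by (intro mult_right_mono) auto
    finally show ?case using n by (simp add: powr_half_sqrt)
  qed
qed

lemma powr_large_eventually:
  assumes p: "p > 0"
  shows "eventually (\<lambda>n. real n powr p \<ge> K) sequentially"
proof -
  have "((\<lambda>n. real n powr (- p)) \<longlongrightarrow> 0) sequentially"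
    using p by (intro tendsto_neg_powr filterlim_real_sequentially) auto
  then have "eventually (\<lambda>n. real n powr (- p) < 1 / (\<bar>K\<bar> + 1)) sequentially"
    by (rule order_tendstoD) (simp add: add_nonneg_pos)
  then show ?thesis using eventually_ge_at_top[of 1]
  proof eventually_elim
    case (elim n)
    then have n: "real n > 0" by simp
    have pos: "0 < real n powr (- p)" using n by simp
    have "real n powr p = 1 / real n powr (- p)" using n by (simp add: powr_minus divide_inverse)
    moreover have "\<bar>K\<bar> + 1 < 1 / real n powr (- p)"
      using elim pos by (simp add: field_simps)
    ultimately show ?case by linarith
  qed
qed

lemma asym1:
  fixes L :: "nat \<Rightarrow> real"
  assumes p: "p > 0" and q: "q \<ge> 0" and rho: "\<rho> > 0" and exps: "p * (1 + \<rho>) + q < 1/2"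
    and Lb: "eventually (\<lambda>n. L n \<le> 2 * real n powr p) sequentially"
    and L1: "eventually (\<lambda>n. L n \<ge> 1) sequentially"
    and A: "A \<ge> 0" and e: "e > 0"
  shows "eventually (\<lambda>n. A * real n powr q * (L n + 1) * L n powr \<rho> \<le> e * sqrt (real n)) sequentially"
proof -
  define A' where "A' = 2 * A * 2 powr (1 + \<rho>) + 1"
  have A': "A' > 0" unfolding A'_def using A by (simp add: add_nonneg_pos)
  have ev: "eventually (\<lambda>n. real n powr (q + p * (1 + \<rho>)) \<le> (e / A') * sqrt (real n)) sequentially"
    using exps e A' by (intro powr_small_eventually) auto
  show ?thesis using Lb L1 ev
  proof eventually_elim
    case (elim n)
    have Lpos: "L n > 0" using elim by simp
    have np: "0 \<le> real n powr p" by simp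
    have "A * real n powr q * (L n + 1) * L n powr \<rho> \<le> A * real n powr q * (2 * L n) * L n powr \<rho>"
      using elim A by (intro mult_right_mono mult_left_mono) auto
    also have "\<dots> = 2 * A * real n powr q * L n powr (1 + \<rho>)"
      using Lpos by (simp add: powr_add)
    also have "\<dots> \<le> 2 * A * real n powr q * (2 * real n powr p) powr (1 + \<rho>)"
      using elim A Lpos rho by (intro mult_left_mono powr_mono2) auto
    also have "(2 * real n powr p) powr (1 + \<rho>) = 2 powr (1 + \<rho>) * real n powr (p * (1 + \<rho>))"
      by (simp add: powr_mult powr_powr)
    also have "2 * A * real n powr q * (2 powr (1 + \<rho>) * real n powr (p * (1 + \<rho>)))
        = (2 * A * 2 powr (1 + \<rho>)) * real n powr (q + p * (1 + \<rho>))"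
      by (simp add: powr_add mult_ac)
    also have "\<dots> \<le> A' * real n powr (q + p * (1 + \<rho>))"
      unfolding A'_def by (intro mult_right_mono) auto
    also have "\<dots> \<le> A' * ((e / A') * sqrt (real n))"
      using elim A' by (intro mult_left_mono) auto
    also have "\<dots> = e * sqrt (real n)" using A' by simp
    finally show ?case .
  qed
qed

lemma asym2:
  fixes L :: "nat \<Rightarrow> real"
  assumes p: "p > 0" and rho: "\<rho> > 0" and exps: "p * \<rho> < 1"
    and Lb: "eventually (\<lambda>n. L n \<le> 2 * real n powr p) sequentially"
    and L0: "eventually (\<lambda>n. L n \<ge> 0) sequentially"
  shows "(\<lambda>n. L n / real n powr (1 / \<rho>)) \<longlonglongrightarrow> 0"
proof (rule tendsto_sandwich[where f="\<lambda>_. 0" and h="\<lambda>n. 2 * real n powr (p - 1/\<rho>)"])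
  show "eventually (\<lambda>n. 0 \<le> L n / real n powr (1 / \<rho>)) sequentially"
    using L0 by eventually_elim simp
  show "eventually (\<lambda>n. L n / real n powr (1 / \<rho>) \<le> 2 * real n powr (p - 1/\<rho>)) sequentially"
    using Lb eventually_ge_at_top[of 1]
  proof eventually_elim
    case (elim n)
    then have n: "real n > 0" by simp
    have "L n / real n powr (1 / \<rho>) \<le> 2 * real n powr p / real n powr (1 / \<rho>)"
      using elim n by (intro divide_right_mono) auto
    also have "\<dots> = 2 * real n powr (p - 1/\<rho>)" using n by (simp add: powr_diff)
    finally show ?case .
  qed
  show "(\<lambda>_. 0) \<longlonglongrightarrow> (0::real)" by simp
  have "p - 1/\<rho> < 0" using exps rho p by (simp add: field_simps)
  then have "(\<lambda>n. real n powr (p - 1/\<rho>)) \<longlonglongrightarrow> 0"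
    by (intro tendsto_neg_powr filterlim_real_sequentially) auto
  then show "(\<lambda>n. 2 * real n powr (p - 1/\<rho>)) \<longlonglongrightarrow> 0"
    using tendsto_mult_left[of _ 0 _ 2] by simp
qed

lemma Lbound:
  fixes h :: "nat \<Rightarrow> real"
  assumes hr: "h \<in> \<Theta>(\<lambda>n. exp (- (real n powr \<theta>)))" and tp: "\<theta> \<le> p" and p: "p > 0"
    and hpos: "\<forall>n. h n > 0"
  shows "eventually (\<lambda>n. ln (1 / h n) \<le> 2 * real n powr p) sequentially"
proof -
  have "h \<in> \<Omega>(\<lambda>n. exp (- (real n powr \<theta>)))" using hr by blast
  then obtain c where c: "c > 0" and ev: "eventually (\<lambda>n. norm (h n) \<ge> c * norm (exp (- (real n powr \<theta>)))) sequentially"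
    by (elim landau_omega.bigE) auto
  have ev2: "eventually (\<lambda>n. real n powr p \<ge> - ln c) sequentially"
    using powr_large_eventually[OF p] by blast
  show ?thesis using ev ev2 eventually_ge_at_top[of 1]
  proof eventually_elim
    case (elim n)
    have n: "real n \<ge> 1" using elim by simp
    have "c * exp (- (real n powr \<theta>)) \<le> h n" using elim hpos[rule_format, of n] by simp
    then have "ln (c * exp (- (real n powr \<theta>))) \<le> ln (h n)"
      using c by (intro ln_mono) auto
    then have "ln c - real n powr \<theta> \<le> ln (h n)" using c by (simp add: ln_mult)
    moreover have "real n powr \<theta> \<le> real n powr p" using n tp by (intro powr_mono) auto
    moreover have "ln (1 / h n) = - ln (h n)" using hpos by (simp add: ln_div)
    ultimately show ?case using elim by linarith
  qed
qed


lemma aux_lin: "\<bar>b\<bar> < d/2 \<Longrightarrow> e < d/2 \<Longrightarrow> d \<le> a + \<bar>b\<bar> \<Longrightarrow> \<not> a < (e::real)"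
  by linarith

locale seqs =
  fixes h eps H :: "nat \<Rightarrow> real"
  assumes hpos: "\<forall>n. h n > 0" and epos: "\<forall>n. eps n > 0" and h0: "h \<longlonglongrightarrow> 0"
    and e0: "eps \<longlonglongrightarrow> 0" and Hinf: "filterlim H at_top sequentially"
    and he: "(\<lambda>n. h n / eps n) \<longlonglongrightarrow> 0" and ehalf: "\<forall>n. eps n < 1/2"
begin

lemma ev_hz: "a > 0 \<Longrightarrow> eventually (\<lambda>n. \<bar>h n * z\<bar> < a) sequentially"
proof -
  assume a: "a > 0"
  have "(\<lambda>n. \<bar>h n * z\<bar>) \<longlonglongrightarrow> \<bar>0 * z\<bar>" by (intro tendsto_intros h0)
  then show ?thesis using a by (auto dest: order_tendstoD)
qed

lemma ev_hz_eps: "eventually (\<lambda>n. \<bar>h n * z\<bar> < eps n) sequentially"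
proof -
  have "(\<lambda>n. \<bar>z\<bar> * (h n / eps n)) \<longlonglongrightarrow> \<bar>z\<bar> * 0" by (intro tendsto_intros he)
  then have "eventually (\<lambda>n. \<bar>z\<bar> * (h n / eps n) < 1) sequentially"
    by (rule order_tendstoD(2)) simp
  then show ?thesis
  proof eventually_elim
    case (elim n)
    have e: "eps n > 0" using epos by simp
    have "\<bar>h n * z\<bar> = (\<bar>z\<bar> * (h n / eps n)) * eps n" using e hpos[rule_format, of n] by (simp add: abs_mult)
    also have "\<dots> < 1 * eps n" using elim e by (intro mult_strict_right_mono) auto
    finally show ?case by simp
  qed
qed

lemma ev_eps: "a > 0 \<Longrightarrow> eventually (\<lambda>n. eps n < a) sequentially"
  using e0 by (auto dest: order_tendstoD)

lemma ev_H: "eventually (\<lambda>n. H n > a) sequentially"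
  using Hinf by (simp add: filterlim_at_top_dense)

lemma lim_lambda: "(\<lambda>n. f_lambda (eps n) (H n) (x - h n * z)) \<longlonglongrightarrow> indicator (-{0}) x"
proof (cases "x = 0")
  case True
  show ?thesis
  proof (rule tendsto_eventually)
    show "eventually (\<lambda>n. f_lambda (eps n) (H n) (x - h n * z) = indicator (-{0}) x) sequentially"
      using ev_hz_eps[of z]
      by eventually_elim (use True in \<open>auto simp: f_lambda_def\<close>)
  qed
next
  case False
  then have x: "\<bar>x\<bar> / 2 > 0" by simp
  show ?thesis
  proof (rule tendsto_eventually)
    show "eventually (\<lambda>n. f_lambda (eps n) (H n) (x - h n * z) = indicator (-{0}) x) sequentially"
      using ev_hz[OF x, of z] ev_eps[OF x] ev_H[of "2 * \<bar>x\<bar>"]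
    proof eventually_elim
      case (elim n)
      have "eps n \<le> \<bar>x - h n * z\<bar>" "\<bar>x - h n * z\<bar> \<le> H n" using elim by linarith+
      then show ?case using False by (simp add: f_lambda_def)
    qed
  qed
qed

lemma lim_q: "(\<lambda>n. f_q j (eps n) (x - h n * z)) \<longlonglongrightarrow> indicator {of_int j} x"
proof (cases "x = of_int j")
  case True
  show ?thesis
  proof (rule tendsto_eventually)
    show "eventually (\<lambda>n. f_q j (eps n) (x - h n * z) = indicator {of_int j} x) sequentially"
      using ev_hz_eps[of z]
      by eventually_elim (use True in \<open>auto simp: f_q_def\<close>)
  qed
next
  case False
  then have x: "\<bar>x - of_int j\<bar> / 2 > 0" by simp
  show ?thesis
  proof (rule tendsto_eventually)
    show "eventually (\<lambda>n. f_q j (eps n) (x - h n * z) = indicator {of_int j} x) sequentially"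
      using ev_hz[OF x, of z] ev_eps[OF x]
    proof eventually_elim
      case (elim n)
      have t: "\<bar>x - of_int j\<bar> \<le> \<bar>x - h n * z - of_int j\<bar> + \<bar>h n * z\<bar>"
        using abs_triangle_ineq[of "x - h n * z - of_int j" "h n * z"] by simp
      have "\<not> \<bar>x - h n * z - of_int j\<bar> < eps n" by (rule aux_lin[OF elim(1) elim(2) t])
      then show ?case using False by (simp add: f_q_def)
    qed
  qed
qed

lemma lim_gamma: "c \<noteq> 0 \<Longrightarrow> (\<lambda>n. f_gamma c (h n) (x - h n * z)) \<longlonglongrightarrow> 0"
proof -
  assume c: "c \<noteq> 0"
  have b: "\<bar>f_gamma c (h n) y\<bar> \<le> h n / \<bar>c\<bar>" for n y
  proof (cases "\<bar>y\<bar> < h n")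
    case True
    then show ?thesis using c by (auto simp: f_gamma_def abs_divide intro!: divide_right_mono)
  next
    case False then show ?thesis using hpos[rule_format, of n] by (simp add: f_gamma_def)
  qed
  have "(\<lambda>n. h n / \<bar>c\<bar>) \<longlonglongrightarrow> 0" using tendsto_divide_zero[OF h0, of "\<bar>c\<bar>"] by simp
  note lim = this
  have lim2: "(\<lambda>n. - (h n / \<bar>c\<bar>)) \<longlonglongrightarrow> 0" using tendsto_minus[OF lim] by simp
  show ?thesis
  proof (rule tendsto_sandwich[OF _ _ lim2 lim])
    show "eventually (\<lambda>n. - (h n / \<bar>c\<bar>) \<le> f_gamma c (h n) (x - h n * z)) sequentially"
    proof (rule always_eventually, rule allI)
      fix n show "- (h n / \<bar>c\<bar>) \<le> f_gamma c (h n) (x - h n * z)"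
        using b[of n "x - h n * z"] by linarith
    qed
    show "eventually (\<lambda>n. f_gamma c (h n) (x - h n * z) \<le> h n / \<bar>c\<bar>) sequentially"
    proof (rule always_eventually, rule allI)
      fix n show "f_gamma c (h n) (x - h n * z) \<le> h n / \<bar>c\<bar>"
        using b[of n "x - h n * z"] by linarith
    qed
  qed
qed

end


lemma aux2: "(b::real) \<le> B \<Longrightarrow> B < (x - t)/2 \<Longrightarrow> e < (x-t)/2 \<Longrightarrow> \<not> x - b \<le> t + (e::real)"
  by (simp add: field_simps)

lemma thr_nonint:
  assumes "\<forall>j::int. \<bar>t - of_int j\<bar> > eps"
  shows "thr eps t = t"
proof -
  have 1: "\<not> (\<exists>j::int. of_int j - eps \<le> t \<and> t < of_int j)"
  proof
    assume "\<exists>j::int. of_int j - eps \<le> t \<and> t < of_int j"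
    then obtain j :: int where "of_int j - eps \<le> t" "t < of_int j" by blast
    moreover have "\<bar>t - of_int j\<bar> > eps" using assms by blast
    ultimately show False by linarith
  qed
  have 2: "\<not> (\<exists>j::int. of_int j \<le> t \<and> t \<le> of_int j + eps)"
  proof
    assume "\<exists>j::int. of_int j \<le> t \<and> t \<le> of_int j + eps"
    then obtain j :: int where "of_int j \<le> t" "t \<le> of_int j + eps" by blast
    moreover have "\<bar>t - of_int j\<bar> > eps" using assms by blast
    ultimately show False by linarith
  qed
  show ?thesis unfolding thr_def by (subst if_not_P[OF 1], subst if_not_P[OF 2], rule refl)
qed

lemma thr_int:
  assumes e: "0 < eps" "eps < 1/2" and t: "t = of_int k"
  shows "thr eps t = t + eps"
proof -
  have 1: "\<not> (\<exists>j::int. of_int j - eps \<le> t \<and> t < of_int j)"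
  proof
    assume "\<exists>j::int. of_int j - eps \<le> t \<and> t < of_int j"
    then obtain j :: int where a: "of_int j - eps \<le> t" "t < of_int j" by blast
    then have "k < j" using t by simp
    then have "real_of_int k + 1 \<le> of_int j" by linarith
    then show False using a e t by linarith
  qed
  have ex: "\<exists>j::int. of_int j \<le> t \<and> t \<le> of_int j + eps" using t e by (intro exI[of _ k]) auto
  define j where "j = (SOME j::int. of_int j \<le> t \<and> t \<le> of_int j + eps)"
  have j: "of_int j \<le> t" "t \<le> of_int j + eps" using someI_ex[OF ex] unfolding j_def by auto
  have "j = k"
  proof -
    have "j \<le> k" using j(1) t by simp
    moreover have "real_of_int k < of_int j + 1" using j(2) e t by linarith
    then have "k < j + 1" by linarith
    ultimately show ?thesis by simp
  qed
  then show ?thesis unfolding thr_def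
    by (subst if_not_P[OF 1], subst if_P[OF ex], fold j_def) (simp add: t)
qed

lemma int_dist:
  fixes t :: real
  assumes "t \<notin> \<int>"
  shows "\<exists>d>0. \<forall>j::int. \<bar>t - of_int j\<bar> \<ge> d"
proof -
  define d where "d = min (t - of_int \<lfloor>t\<rfloor>) (of_int \<lceil>t\<rceil> - t)"
  have ne: "t \<noteq> of_int \<lfloor>t\<rfloor>" "t \<noteq> of_int \<lceil>t\<rceil>" using assms by (metis Ints_of_int)+
  have d: "d > 0" unfolding d_def using ne by (simp add: floor_le_iff le_ceiling_iff less_le)
  have c: "\<lceil>t\<rceil> = \<lfloor>t\<rfloor> + 1" using ne(1) by (metis ceiling_altdef)
  have "\<bar>t - of_int j\<bar> \<ge> d" for j :: int
  proof (cases "j \<le> \<lfloor>t\<rfloor>")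
    case True
    then have "of_int j \<le> (of_int \<lfloor>t\<rfloor> :: real)" by simp
    then show ?thesis unfolding d_def using of_int_floor_le[of t] by linarith
  next
    case False
    then have "\<lceil>t\<rceil> \<le> j" using c by simp
    then have "of_int \<lceil>t\<rceil> \<le> (of_int j :: real)" by simp
    then show ?thesis unfolding d_def using le_of_int_ceiling[of t] by linarith
  qed
  then show ?thesis using d by blast
qed

definition Nlim :: "real \<Rightarrow> real \<Rightarrow> real \<Rightarrow> real" where
  "Nlim t z x = (if x \<noteq> 0 \<and> x \<le> t \<and> \<not> (x = t \<and> t \<notin> \<int> \<and> z < 0) then 1 else 0)"

lemma Nlim_avg: "(Nlim t 1 x + Nlim t (-1) x) / 2 = l_lim t x"
  by (auto simp: Nlim_def l_lim_def indicator_def)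

context seqs
begin

lemma ev_thr:
  assumes z: "z \<noteq> 0"
  shows "eventually (\<lambda>n. (x - h n * z \<le> thr (eps n) t) \<longleftrightarrow> (x \<le> t \<and> \<not> (x = t \<and> t \<notin> \<int> \<and> z < 0))) sequentially"
proof (cases "t \<in> \<int>")
  case True
  then obtain k where t: "t = of_int k" by (auto elim: Ints_cases)
  have thr: "thr (eps n) t = t + eps n" for n using epos ehalf t by (intro thr_int) auto
  show ?thesis
  proof (cases "x \<le> t")
    case True
    show ?thesis using ev_hz_eps[of z]
    proof eventually_elim
      case (elim n)
      have "x - h n * z \<le> t + eps n" using True elim abs_ge_minus_self[of "h n * z"] by linarith
      then show ?case using True `t \<in> \<int>` thr by simp
    qed
  next
    case False
    then have d: "(x - t) / 2 > 0" by simp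
    show ?thesis using ev_hz[OF d, of z] ev_eps[OF d]
    proof eventually_elim
      case (elim n)
      have "\<not> x - h n * z \<le> t + eps n" by (rule aux2[OF abs_ge_self elim(1) elim(2)])
      then show ?case using False thr by simp
    qed
  qed
next
  case False
  obtain d where d: "d > 0" "\<And>j::int. \<bar>t - of_int j\<bar> \<ge> d" using int_dist[OF False] by blast
  have thr: "eventually (\<lambda>n. thr (eps n) t = t) sequentially"
    using ev_eps[OF d(1)]
  proof eventually_elim
    case (elim n)
    have "\<forall>j::int. \<bar>t - of_int j\<bar> > eps n" using d(2) elim by (meson less_le_trans)
    then show ?case by (rule thr_nonint)
  qed
  consider "x < t" | "x > t" | "x = t" by linarith
  then show ?thesis
  proof cases
    case 1
    then have dd: "t - x > 0" by simp
    show ?thesis using thr ev_hz[OF dd, of z]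
    proof eventually_elim
      case (elim n)
      have "x - h n * z \<le> t" using elim 1 abs_ge_minus_self[of "h n * z"] by linarith
      then show ?case using elim 1 by simp
    qed
  next
    case 2
    then have dd: "x - t > 0" by simp
    show ?thesis using thr ev_hz[OF dd, of z]
    proof eventually_elim
      case (elim n)
      have "\<not> x - h n * z \<le> t" using elim 2 abs_ge_self[of "h n * z"] by linarith
      then show ?case using elim 2 by simp
    qed
  next
    case 3
    show ?thesis using thr
    proof eventually_elim
      case (elim n)
      have hn: "h n > 0" using hpos by simp
      show ?case
      proof (cases "z < 0")
        case True
        then have "h n * z < 0" using hn by (simp add: mult_pos_neg)
        then show ?thesis using 3 elim False True by simp
      next
        case False
        then have "h n * z > 0" using hn z by simp
        then show ?thesis using 3 elim `t \<notin> \<int>` False by simp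
      qed
    qed
  qed
qed

lemma lim_N:
  assumes z: "z \<noteq> 0"
  shows "(\<lambda>n. f_N (eps n) (H n) t (x - h n * z)) \<longlonglongrightarrow> Nlim t z x"
proof (cases "x = 0")
  case True
  show ?thesis
  proof (rule tendsto_eventually)
    show "eventually (\<lambda>n. f_N (eps n) (H n) t (x - h n * z) = Nlim t z x) sequentially"
      using ev_hz_eps[of z]
      by eventually_elim (use True in \<open>auto simp: f_N_def Nlim_def\<close>)
  qed
next
  case False
  then have x: "\<bar>x\<bar> / 2 > 0" by simp
  show ?thesis
  proof (rule tendsto_eventually)
    show "eventually (\<lambda>n. f_N (eps n) (H n) t (x - h n * z) = Nlim t z x) sequentially"
      using ev_hz[OF x, of z] ev_eps[OF x] ev_H[of "2 * \<bar>x\<bar>"] ev_thr[OF z, of x t]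
    proof eventually_elim
      case (elim n)
      have "eps n \<le> \<bar>x - h n * z\<bar>" "\<bar>x - h n * z\<bar> \<le> H n" using elim by linarith+
      then show ?case using False elim(4) by (simp add: f_N_def g_N_def Nlim_def)
    qed
  qed
qed

end


lemma Qsum:
  assumes J: "finite J" and e: "eps < 1/2"
  shows "(\<Sum>j\<in>J. Cj j * f_q j eps w) = (if round w \<in> J \<and> \<bar>w - of_int (round w)\<bar> < eps then Cj (round w) else 0)"
proof -
  define r where "r = round w"
  have "(\<Sum>j\<in>J. Cj j * f_q j eps w) = (\<Sum>j\<in>J. if j = r then Cj r * f_q r eps w else 0)"
  proof (rule sum.cong[OF refl])
    fix j assume "j \<in> J"
    show "Cj j * f_q j eps w = (if j = r then Cj r * f_q r eps w else 0)"
    proof (cases "\<bar>w - of_int j\<bar> < eps")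
      case True
      then have "round w = j" using e by (intro round_unique') simp
      then show ?thesis by (simp add: r_def)
    next
      case False
      then have "f_q j eps w = 0" by (simp add: f_q_def)
      then show ?thesis by (auto simp: r_def f_q_def)
    qed
  qed
  also have "\<dots> = (if r \<in> J then Cj r * f_q r eps w else 0)" using J by (simp add: sum.delta)
  finally show ?thesis by (simp add: r_def f_q_def)
qed

definition Vq :: "(int \<Rightarrow> real) \<Rightarrow> real \<Rightarrow> real" where
  "Vq Cj x = (if x \<in> \<int> \<and> x \<noteq> 0 then Cj (round x) else 0)"

lemma Vq_infsum: "infsum (\<lambda>j. Cj j * indicator {of_int j} x) (- {0}) = Vq Cj x"
proof (cases "x \<in> \<int>")
  case True
  then obtain k where k: "x = of_int k" by (auto elim: Ints_cases)
  have "infsum (\<lambda>j. Cj j * indicator {of_int j} x) (- {0}) = infsum (\<lambda>j. Cj j * indicator {of_int j} x) ({k} - {0})"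
    by (rule infsum_cong_neutral) (auto simp: k indicator_def)
  also have "\<dots> = (if k \<noteq> 0 then Cj k else 0)" by (cases "k = 0") (auto simp: k)
  also have "\<dots> = Vq Cj x" using k by (simp add: Vq_def)
  finally show ?thesis .
next
  case False
  have "infsum (\<lambda>j. Cj j * indicator {of_int j} x) (- {0}) = 0"
    by (rule infsum_0) (use False in \<open>auto simp: indicator_def\<close>)
  then show ?thesis using False by (simp add: Vq_def)
qed

context seqs
begin

lemma lim_Q:
  fixes Ht :: "nat \<Rightarrow> real"
  assumes Ht: "filterlim Ht at_top sequentially"
  shows "(\<lambda>n. \<Sum>j\<in>{j::int. 0 < \<bar>j\<bar> \<and> of_int \<bar>j\<bar> \<le> Ht n}. Cj j * f_q j (eps n) (x - h n * z)) \<longlonglongrightarrow> Vq Cj x"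
proof (rule tendsto_eventually)
  define J where "J n = {j::int. 0 < \<bar>j\<bar> \<and> of_int \<bar>j\<bar> \<le> Ht n}" for n
  have fin: "finite (J n)" for n
  proof -
    have "J n \<subseteq> {-\<lceil>\<bar>Ht n\<bar>\<rceil>..\<lceil>\<bar>Ht n\<bar>\<rceil>}" unfolding J_def
    proof
      fix j assume "j \<in> {j::int. 0 < \<bar>j\<bar> \<and> of_int \<bar>j\<bar> \<le> Ht n}"
      then have "of_int \<bar>j\<bar> \<le> \<bar>Ht n\<bar>" by auto
      then have "\<bar>j\<bar> \<le> \<lceil>\<bar>Ht n\<bar>\<rceil>" by (meson le_ceiling_iff order_trans le_of_int_ceiling of_int_le_iff)
      then show "j \<in> {-\<lceil>\<bar>Ht n\<bar>\<rceil>..\<lceil>\<bar>Ht n\<bar>\<rceil>}" by auto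
    qed
    then show ?thesis by (rule finite_subset) simp
  qed
  have Q: "(\<Sum>j\<in>J n. Cj j * f_q j (eps n) w) = (if round w \<in> J n \<and> \<bar>w - of_int (round w)\<bar> < eps n then Cj (round w) else 0)" for n w
    using ehalf by (intro Qsum fin) auto
  show "eventually (\<lambda>n. (\<Sum>j\<in>{j::int. 0 < \<bar>j\<bar> \<and> of_int \<bar>j\<bar> \<le> Ht n}. Cj j * f_q j (eps n) (x - h n * z)) = Vq Cj x) sequentially"
    unfolding J_def[symmetric] Q
  proof (cases "x \<in> \<int>")
    case True
    then obtain k where k: "x = of_int k" by (auto elim: Ints_cases)
    have ev: "eventually (\<lambda>n. Ht n \<ge> of_int \<bar>k\<bar>) sequentially" using Ht by (simp add: filterlim_at_top)
    show "eventually (\<lambda>n. (if round (x - h n * z) \<in> J n \<and> \<bar>x - h n * z - of_int (round (x - h n * z))\<bar> < eps n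
        then Cj (round (x - h n * z)) else 0) = Vq Cj x) sequentially"
      using ev ev_hz_eps[of z]
    proof eventually_elim
      case (elim n)
      have r: "round (x - h n * z) = k"
        using elim(2) ehalf[rule_format, of n] k by (intro round_unique') auto
      have "\<bar>x - h n * z - of_int k\<bar> < eps n" using elim(2) k by simp
      then show ?case using r elim(1) k by (auto simp: J_def Vq_def)
    qed
  next
    case False
    obtain d where d: "d > 0" "\<And>j::int. \<bar>x - of_int j\<bar> \<ge> d" using int_dist[OF False] by blast
    have d2: "d / 2 > 0" using d by simp
    show "eventually (\<lambda>n. (if round (x - h n * z) \<in> J n \<and> \<bar>x - h n * z - of_int (round (x - h n * z))\<bar> < eps n
        then Cj (round (x - h n * z)) else 0) = Vq Cj x) sequentially"
      using ev_hz[OF d2, of z] ev_eps[OF d2]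
    proof eventually_elim
      case (elim n)
      define r where "r = round (x - h n * z)"
      have t: "\<bar>x - of_int r\<bar> \<le> \<bar>x - h n * z - of_int r\<bar> + \<bar>h n * z\<bar>"
        using abs_triangle_ineq[of "x - h n * z - of_int r" "h n * z"] by simp
      have "\<not> \<bar>x - h n * z - of_int r\<bar> < eps n"
        using aux_lin[OF _ elim(2), of "h n * z" "\<bar>x - h n * z - of_int r\<bar>"] elim(1) d(2)[of r] t by linarith
      then show ?case using False by (simp add: Vq_def r_def)
    qed
  qed
qed

end


lemma choose_delta:
  fixes p q :: real
  assumes p: "p > 0" and q: "q \<ge> 0" and pq: "2 * p + q < 1/2"
  shows "\<exists>\<delta>>0. p * (1 + (1 + 2 * \<delta>)) + q < 1/2 \<and> p * (1 + 2 * \<delta>) < 1"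
proof -
  define \<rho> where "\<rho> = (1/2 - q) / (2 * p)"
  define \<delta> where "\<delta> = (\<rho> - 1) / 2"
  have r: "1 + 2 * \<delta> = \<rho>" unfolding \<delta>_def by (simp add: field_simps)
  have "\<rho> > 1" unfolding \<rho>_def using p pq by (simp add: field_simps)
  then have d: "\<delta> > 0" unfolding \<delta>_def by simp
  have pr: "p * \<rho> = (1/2 - q) / 2" unfolding \<rho>_def using p by (simp add: field_simps)
  have e1: "p * (1 + (1 + 2 * \<delta>)) + q = p + (1/2 - q) / 2 + q"
    unfolding r using pr by (simp add: distrib_left)
  have e2: "p * (1 + 2 * \<delta>) = (1/2 - q) / 2" unfolding r using pr .
  have g1: "p * (1 + (1 + 2 * \<delta>)) + q < 1/2" unfolding e1 using pq by (simp add: field_simps)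
  have g2: "p * (1 + 2 * \<delta>) < 1" unfolding e2 using q by (simp add: field_simps)
  show ?thesis using d g1 g2 by blast
qed

lemma FI_ev:
  fixes h H :: "nat \<Rightarrow> real" and G :: "'i \<Rightarrow> nat \<Rightarrow> real \<Rightarrow> real"
  assumes hpos: "\<forall>n. h n > 0" and h0: "h \<longlonglongrightarrow> 0" and hH: "(\<lambda>n. h n * H n) \<longlonglongrightarrow> 0"
    and Hinf: "filterlim H at_top sequentially"
    and Lb: "eventually (\<lambda>n. ln (1 / h n) \<le> 2 * real n powr p) sequentially"
    and p: "p > 0" and q: "q \<ge> 0" and rho: "1 + 2 * \<delta> > 0" and exps: "p * (1 + (1 + 2 * \<delta>)) + q < 1/2"
    and bnd: "eventually (\<lambda>n. \<forall>i\<in>I. \<forall>u\<in>{-(1/h n)..1/h n}. cmod (FT (G i n) u) \<le> M n * beta (\<bar>H n\<bar> + 1) u + C n) sequentially"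
    and M0: "\<forall>n. 0 \<le> M n" and Mb: "eventually (\<lambda>n. M n \<le> Amul * real n powr q) sequentially"
    and C0: "\<forall>n. 0 \<le> C n" and Cb: "\<forall>n. C n \<le> Acon * (h n)\<^sup>2"
    and A: "Amul \<ge> 0" "Acon \<ge> 0"
  shows "\<forall>e>0. eventually (\<lambda>n. \<forall>i\<in>I. FI (G i n) (h n) \<le> e * rate h \<delta> n) sequentially"
proof (intro allI impI)
  fix e :: real assume e: "e > 0"
  define L where "L n = ln (1 / h n)" for n
  define A where "A = 16 * Amul + 2 * Acon"
  have A0: "A \<ge> 0" using A by (simp add: A_def)
  have evh: "eventually (\<lambda>n. h n < exp (-1)) sequentially" using order_tendstoD(2)[OF h0, of "exp (-1)"] by simp
  have L1: "eventually (\<lambda>n. L n \<ge> 1) sequentially" using evh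
  proof eventually_elim
    case (elim n)
    have hn: "h n > 0" using hpos by simp
    have "ln (h n) < -1" using elim hn by (metis ln_exp ln_less_cancel_iff exp_gt_zero)
    then show ?case using hn by (simp add: L_def ln_div)
  qed
  have Lb': "eventually (\<lambda>n. L n \<le> 2 * real n powr p) sequentially" using Lb by (simp add: L_def)
  have as: "eventually (\<lambda>n. A * real n powr q * (L n + 1) * L n powr (1 + 2 * \<delta>) \<le> e * sqrt (real n)) sequentially"
    by (rule asym1[OF p q rho exps Lb' L1 A0 e])
  have evh2: "eventually (\<lambda>n. h n < 1/2) sequentially" using order_tendstoD(2)[OF h0, of "1/2"] by simp
  have evhH: "eventually (\<lambda>n. h n * H n + h n < 1/2) sequentially"
  proof -
    have "(\<lambda>n. h n * H n + h n) \<longlonglongrightarrow> 0 + 0" by (intro tendsto_add hH h0)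
    then have "(\<lambda>n. h n * H n + h n) \<longlonglongrightarrow> 0" by simp
    from order_tendstoD(2)[OF this, of "1/2"] show ?thesis by simp
  qed
  have evH: "eventually (\<lambda>n. H n > 0) sequentially" using Hinf by (simp add: filterlim_at_top_dense)
  show "eventually (\<lambda>n. \<forall>i\<in>I. FI (G i n) (h n) \<le> e * rate h \<delta> n) sequentially"
    using bnd Mb as evh2 evhH evH L1 eventually_ge_at_top[of 1]
  proof eventually_elim
    case (elim n)
    have hn: "h n > 0" using hpos by simp
    have Ln: "L n \<ge> 1" using elim by simp
    have n1: "real n \<ge> 1" using elim by simp
    have nq: "real n powr q \<ge> 1" using n1 q by (simp add: ge_one_powr_ge_zero)
    define Hn where "Hn = \<bar>H n\<bar> + 1"
    have Hn: "Hn = H n + 1" using elim unfolding Hn_def by simp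
    have Hpos: "Hn > 0" unfolding Hn_def by simp
    have lg: "ln (1 + Hn / (2 * h n)) \<le> 2 * L n"
    proof -
      have "h n * h n + h n * Hn / 2 \<le> 1"
      proof -
        have "h n * h n \<le> (1/2) * (1/2)" using elim hn by (intro mult_mono) auto
        moreover have "h n * Hn = h n * H n + h n" unfolding Hn by (simp add: algebra_simps)
        ultimately show ?thesis using elim by linarith
      qed
      moreover have "1 + Hn / (2 * h n) = (h n * h n + h n * Hn / 2) / (h n)\<^sup>2"
        using hn by (simp add: field_simps power2_eq_square)
      ultimately have "1 + Hn / (2 * h n) \<le> 1 / (h n)\<^sup>2"
        using hn by (simp add: divide_right_mono)
      then have "ln (1 + Hn / (2 * h n)) \<le> ln (1 / (h n)\<^sup>2)"
        using hn Hpos by (intro ln_mono) (auto intro: add_pos_nonneg)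
      also have "\<dots> = 2 * L n" using hn by (simp add: L_def ln_div ln_realpow power_one_over[symmetric])
      finally show ?thesis .
    qed
    have bound: "\<forall>i\<in>I. FI (G i n) (h n) \<le> A * real n powr q * (L n + 1)"
    proof
      fix i assume i: "i \<in> I"
      have "FI (G i n) (h n) \<le> 8 * M n * ln (1 + Hn / (2 * h n)) + 2 * C n / h n"
        by (rule FI_bound[OF hn Hpos M0[rule_format] C0[rule_format]]) (use elim(1) i in \<open>auto simp: Hn_def\<close>)
      also have "8 * M n * ln (1 + Hn / (2 * h n)) \<le> 8 * (Amul * real n powr q) * (2 * L n)"
      proof -
        have lx0: "0 \<le> ln (1 + Hn / (2 * h n))" using Hpos hn by (intro ln_ge_zero) simp
        have "M n * ln (1 + Hn / (2 * h n)) \<le> (Amul * real n powr q) * (2 * L n)"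
          by (rule mult_mono[OF elim(2) lg _ lx0]) (use A in simp)
        then have "8 * (M n * ln (1 + Hn / (2 * h n))) \<le> 8 * ((Amul * real n powr q) * (2 * L n))"
          by (rule mult_left_mono) simp
        then show ?thesis by (simp only: mult.assoc)
      qed
      also have "2 * C n / h n \<le> 2 * Acon * h n"
        using Cb[rule_format, of n] hn by (simp add: field_simps power2_eq_square)
      also have "2 * Acon * h n \<le> 2 * Acon * (real n powr q * (L n + 1))"
      proof -
        have h1: "h n \<le> 1" using elim by simp
        have X1: "1 \<le> real n powr q * (L n + 1)"
          using mult_mono[of 1 "real n powr q" 1 "L n + 1"] nq Ln by simp
        have "h n \<le> real n powr q * (L n + 1)" using h1 X1 by linarith
        then show ?thesis using A by (intro mult_left_mono) auto
      qed
      also have "8 * (Amul * real n powr q) * (2 * L n) + 2 * Acon * (real n powr q * (L n + 1))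
          \<le> A * real n powr q * (L n + 1)"
      proof -
        have x0: "0 \<le> 16 * Amul * real n powr q" using A by simp
        have "16 * Amul * real n powr q * L n \<le> 16 * Amul * real n powr q * (L n + 1)"
          by (rule mult_left_mono[OF _ x0]) simp
        moreover have "A * real n powr q * (L n + 1) = 16 * Amul * real n powr q * (L n + 1) + 2 * Acon * (real n powr q * (L n + 1))"
          unfolding A_def by (simp add: algebra_simps)
        moreover have "8 * (Amul * real n powr q) * (2 * L n) = 16 * Amul * real n powr q * L n" by simp
        ultimately show ?thesis by linarith
      qed
      finally show "FI (G i n) (h n) \<le> A * real n powr q * (L n + 1)" by simp
    qed
    have Lpos: "L n > 0" using Ln by simp
    have Lr: "L n powr (1 + 2 * \<delta>) > 0" using Lpos by simp
    have "A * real n powr q * (L n + 1) \<le> e * sqrt (real n) / L n powr (1 + 2 * \<delta>)"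
      using elim(3) Lr by (simp add: pos_le_divide_eq)
    also have "\<dots> = e * rate h \<delta> n"
    proof -
      have "L n powr (- (1 + 2 * \<delta>)) = 1 / L n powr (1 + 2 * \<delta>)" by (rule powr_minus_divide)
      then show ?thesis unfolding rate_def L_def[symmetric] by simp
    qed
    finally show ?case using bound by auto
  qed
qed


lemma nice_meas: "nice g \<Longrightarrow> g \<in> borel_measurable borel"
  unfolding nice_def by blast

lemma props_intro:
  assumes nice: "\<And>i n. i \<in> I \<Longrightarrow> nice (G i n)"
    and FI: "\<forall>e>0. eventually (\<lambda>n. \<forall>i\<in>I. FI (G i n) (h n) \<le> e * rate h \<delta> n) sequentially"
    and B: "\<And>i. i \<in> I \<Longrightarrow> \<exists>B. \<forall>n x. \<bar>G i n x\<bar> \<le> B"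
    and conv: "\<And>i x. i \<in> I \<Longrightarrow> convergent (\<lambda>n. conv (G i n) (Kh K (h n)) x)"
  shows "props K h \<delta> G I"
proof -
  have a: "\<forall>i\<in>I. \<forall>n. G i n \<in> borel_measurable borel \<and> bounded (range (G i n)) \<and> integrable lborel (\<lambda>x. (G i n x)\<^sup>2)"
    using nice nice_sq nice_meas by blast
  have b: "\<forall>i\<in>I. \<exists>B. \<forall>n x. \<bar>G i n x\<bar> \<le> B" using B by blast
  have c: "\<forall>i\<in>I. \<forall>x. convergent (\<lambda>n. conv (G i n) (Kh K (h n)) x)" using conv by blast
  show ?thesis unfolding props_def using a FI b c by blast
qed

lemma conv_DCT_same:
  fixes K :: "real \<Rightarrow> real" and g :: "nat \<Rightarrow> real \<Rightarrow> real" and h :: "nat \<Rightarrow> real"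
  assumes Kint: "integrable lborel K" and sym: "\<forall>x. K (- x) = K x"
    and one: "(LINT x|lborel. K x) = 1"
    and hpos: "\<forall>n. h n > 0"
    and gm: "\<And>n. g n \<in> borel_measurable borel" and gb: "\<And>n y. \<bar>g n y\<bar> \<le> B"
    and lim: "\<And>z. z \<noteq> 0 \<Longrightarrow> (\<lambda>n. g n (x - h n * z)) \<longlonglongrightarrow> a"
  shows "(\<lambda>n. conv (g n) (Kh K (h n)) x) \<longlonglongrightarrow> a"
  using conv_DCT[OF Kint sym one hpos gm gb, where x=x and a=a and b=a] lim by simp


lemma part1:
  fixes K :: "real \<Rightarrow> real" and h eps H :: "nat \<Rightarrow> real" and theta_h C' \<eta> :: real
  assumes K_meas: "K \<in> borel_measurable borel"
    and K_sym: "\<forall>x. K (- x) = K x"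
    and K_int: "integrable lborel K" "(LINT x|lborel. K x) = 1"
    and K_FT: "closure {u. FT K u \<noteq> 0} \<subseteq> {-1..1}"
    and K_decay: "\<eta> > 2" "\<forall>x. \<bar>K x\<bar> \<le> C' * (1 + \<bar>x\<bar>) powr (- \<eta>)"
    and h_pos: "\<forall>n. h n > 0" and eps_pos: "\<forall>n. eps n > 0"
    and h_lim: "h \<longlonglongrightarrow> 0" and eps_lim: "eps \<longlonglongrightarrow> 0"
    and H_lim: "filterlim H at_top sequentially"
    and h_rate: "h \<in> \<Theta>(\<lambda>n. exp (- (real n powr theta_h)))" and theta_h: "theta_h < 1/4"
    and h_eps: "(\<lambda>n. h n / eps n) \<longlonglongrightarrow> 0"
    and h_H: "(\<lambda>n. h n * H n) \<longlonglongrightarrow> 0"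
    and eps_half: "\<forall>n. eps n < 1/2"
    and H_int: "\<forall>n. \<forall>j::int. \<bar>H n - of_int j\<bar> > eps n"
  shows
    "\<exists>\<delta>>0. (\<lambda>n. ln (1 / h n) / real n powr (1 / (1 + 2 * \<delta>))) \<longlonglongrightarrow> 0 \<and>
       props K h \<delta> (\<lambda>(_::unit) n. f_lambda (eps n) (H n)) UNIV \<and>
       (\<forall>c. c \<noteq> 0 \<longrightarrow> props K h \<delta> (\<lambda>(_::unit) n. f_gamma c (h n)) UNIV) \<and>
       props K h \<delta> (\<lambda>j n. f_q j (eps n)) {j. j \<noteq> 0} \<and>
       props K h \<delta> (\<lambda>t n. f_N (eps n) (H n) t) UNIV \<and>
       (\<forall>x. (\<lambda>n. conv (f_lambda (eps n) (H n)) (Kh K (h n)) x) \<longlonglongrightarrow> indicator (- {0}) x) \<and>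
       (\<forall>c x. c \<noteq> 0 \<longrightarrow> (\<lambda>n. conv (f_gamma c (h n)) (Kh K (h n)) x) \<longlonglongrightarrow> 0) \<and>
       (\<forall>j x. (\<lambda>n. conv (f_q j (eps n)) (Kh K (h n)) x) \<longlonglongrightarrow> indicator {of_int j} x) \<and>
       (\<forall>t x. (\<lambda>n. conv (f_N (eps n) (H n) t) (Kh K (h n)) x) \<longlonglongrightarrow> l_lim t x)"
proof -
  interpret S: seqs h eps H using h_pos eps_pos h_lim eps_lim H_lim h_eps eps_half by unfold_locales auto
  have hn: "h n > 0" for n using h_pos by simp
  have en: "eps n > 0" "eps n < 1/2" for n using eps_pos eps_half by auto
  have "Bseq h" using h_lim by (intro convergent_imp_Bseq) (auto simp: convergent_def)
  then obtain hmax where hmax0: "\<forall>n. norm (h n) \<le> hmax" by (rule BseqE) blast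
  have hmax: "h n \<le> hmax" for n using hmax0[rule_format, of n] by simp
  define p where "p = max theta_h (1/16)"
  have p: "p > 0" "theta_h \<le> p" "2 * p + 0 < 1/2" using theta_h by (auto simp: p_def)
  obtain \<delta> where d: "\<delta> > 0" "p * (1 + (1 + 2 * \<delta>)) + 0 < 1/2" "p * (1 + 2 * \<delta>) < 1"
    using choose_delta[of p 0] p by blast
  have rho: "1 + 2 * \<delta> > 0" using d by simp
  have Lb: "eventually (\<lambda>n. ln (1 / h n) \<le> 2 * real n powr p) sequentially"
    by (rule Lbound[OF h_rate p(2) p(1) h_pos])
  have L0: "eventually (\<lambda>n. ln (1 / h n) \<ge> 0) sequentially"
  proof -
    have "eventually (\<lambda>n. h n < 1) sequentially" using order_tendstoD(2)[OF h_lim, of 1] by simp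
    then show ?thesis
    proof eventually_elim
      case (elim n) then show ?case using hn[of n] by (simp add: ln_div)
    qed
  qed
  have lim: "(\<lambda>n. ln (1 / h n) / real n powr (1 / (1 + 2 * \<delta>))) \<longlonglongrightarrow> 0"
    by (rule asym2[OF p(1) rho d(3) Lb L0])
  have n1: "eventually (\<lambda>n. c \<le> c * real n powr 0) sequentially" for c :: real
    using eventually_ge_at_top[of 1] by eventually_elim simp
  note FIgen = FI_ev[OF h_pos h_lim h_H H_lim Lb p(1) order_refl rho d(2)]
  have cl: "(\<lambda>n. conv (f_lambda (eps n) (H n)) (Kh K (h n)) x) \<longlonglongrightarrow> indicator (- {0}) x" for x
    by (rule conv_DCT_same[OF K_int(1) K_sym K_int(2) h_pos nice_meas[OF nice_f_lambda[OF en(1)]], where B=1])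
       (simp add: f_lambda_def, rule S.lim_lambda)
  have cg: "(\<lambda>n. conv (f_gamma c (h n)) (Kh K (h n)) x) \<longlonglongrightarrow> 0" if c: "c \<noteq> 0" for c x
  proof (rule conv_DCT_same[OF K_int(1) K_sym K_int(2) h_pos f_gamma_meas, where B="hmax / \<bar>c\<bar>"])
    show "\<bar>f_gamma c (h n) y\<bar> \<le> hmax / \<bar>c\<bar>" for n y
    proof -
      have "\<bar>f_gamma c (h n) y\<bar> \<le> (h n / \<bar>c\<bar>) * indicator {-h n..h n} y" by (rule f_gamma_bound[OF c hn])
      also have "\<dots> \<le> h n / \<bar>c\<bar>" using hn[of n] by (simp add: indicator_def)
      also have "\<dots> \<le> hmax / \<bar>c\<bar>" using hmax[of n] by (simp add: divide_right_mono)
      finally show ?thesis .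
    qed
    show "(\<lambda>n. f_gamma c (h n) (x - h n * z)) \<longlonglongrightarrow> 0" for z by (rule S.lim_gamma[OF c])
  qed
  have cq: "(\<lambda>n. conv (f_q j (eps n)) (Kh K (h n)) x) \<longlonglongrightarrow> indicator {of_int j} x" for j x
    by (rule conv_DCT_same[OF K_int(1) K_sym K_int(2) h_pos nice_meas[OF nice_f_q], where B=1])
       (simp add: f_q_def, rule S.lim_q)
  have cN: "(\<lambda>n. conv (f_N (eps n) (H n) t) (Kh K (h n)) x) \<longlonglongrightarrow> l_lim t x" for t x
  proof -
    have "(\<lambda>n. conv (f_N (eps n) (H n) t) (Kh K (h n)) x) \<longlonglongrightarrow> (Nlim t 1 x + Nlim t (-1) x) / 2"
    proof (rule conv_DCT[OF K_int(1) K_sym K_int(2) h_pos nice_meas[OF nice_f_N[OF en(1)]], where B=1])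
      show "\<bar>f_N (eps n) (H n) t y\<bar> \<le> 1" for n y by (simp add: f_N_def g_N_def)
      show "(\<lambda>n. f_N (eps n) (H n) t (x - h n * z)) \<longlonglongrightarrow> Nlim t 1 x" if "z > 0" for z
        using S.lim_N[of z t x] that by (simp add: Nlim_def)
      show "(\<lambda>n. f_N (eps n) (H n) t (x - h n * z)) \<longlonglongrightarrow> Nlim t (-1) x" if "z < 0" for z
        using S.lim_N[of z t x] that by (simp add: Nlim_def)
    qed
    then show ?thesis by (simp add: Nlim_avg)
  qed
  have pl: "props K h \<delta> (\<lambda>(_::unit) n. f_lambda (eps n) (H n)) UNIV"
  proof (rule props_intro)
    show "nice (f_lambda (eps n) (H n))" for n by (rule nice_f_lambda[OF en(1)])
    show "\<forall>e>0. eventually (\<lambda>n. \<forall>i\<in>UNIV. FI ((\<lambda>(_::unit) n. f_lambda (eps n) (H n)) i n) (h n) \<le> e * rate h \<delta> n) sequentially"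
      by (rule FIgen[where M="\<lambda>n. 2" and C="\<lambda>n. 0" and Amul=2 and Acon=0])
         (use FT_f_lambda[OF en(1)] n1 in auto)
    show "\<exists>B. \<forall>n x. \<bar>f_lambda (eps n) (H n) x\<bar> \<le> B" by (rule exI[of _ 1]) (simp add: f_lambda_def)
    show "convergent (\<lambda>n. conv (f_lambda (eps n) (H n)) (Kh K (h n)) x)" for x
      using cl by (auto simp: convergent_def)
  qed
  have pg: "props K h \<delta> (\<lambda>(_::unit) n. f_gamma c (h n)) UNIV" if c: "c \<noteq> 0" for c
  proof (rule props_intro)
    show "nice (f_gamma c (h n))" for n by (rule nice_f_gamma[OF c hn])
    show "\<forall>e>0. eventually (\<lambda>n. \<forall>i\<in>UNIV. FI ((\<lambda>(_::unit) n. f_gamma c (h n)) i n) (h n) \<le> e * rate h \<delta> n) sequentially"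
    proof (rule FIgen[where M="\<lambda>n. 0" and C="\<lambda>n. 2 / \<bar>c\<bar> * (h n)\<^sup>2" and Amul=0 and Acon="2 / \<bar>c\<bar>"])
      show "eventually (\<lambda>n. \<forall>i\<in>UNIV. \<forall>u\<in>{-(1/h n)..1/h n}. cmod (FT ((\<lambda>(_::unit) n. f_gamma c (h n)) i n) u)
          \<le> 0 * beta (\<bar>H n\<bar> + 1) u + 2 / \<bar>c\<bar> * (h n)\<^sup>2) sequentially"
        using FT_f_gamma[OF c hn] by (auto simp: power2_eq_square mult_ac)
    qed auto
    show "\<exists>B. \<forall>n x. \<bar>f_gamma c (h n) x\<bar> \<le> B"
    proof (rule exI[of _ "hmax / \<bar>c\<bar>"], intro allI)
      fix n x
      have "\<bar>f_gamma c (h n) x\<bar> \<le> (h n / \<bar>c\<bar>) * indicator {-h n..h n} x" by (rule f_gamma_bound[OF c hn])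
      also have "\<dots> \<le> h n / \<bar>c\<bar>" using hn[of n] by (simp add: indicator_def)
      also have "\<dots> \<le> hmax / \<bar>c\<bar>" using hmax[of n] by (simp add: divide_right_mono)
      finally show "\<bar>f_gamma c (h n) x\<bar> \<le> hmax / \<bar>c\<bar>" .
    qed
    show "convergent (\<lambda>n. conv (f_gamma c (h n)) (Kh K (h n)) x)" for x
      using cg[OF c] by (auto simp: convergent_def)
  qed
  have pq: "props K h \<delta> (\<lambda>j n. f_q j (eps n)) {j. j \<noteq> 0}"
  proof (rule props_intro)
    show "nice (f_q j (eps n))" for j n by (rule nice_f_q)
    show "\<forall>e>0. eventually (\<lambda>n. \<forall>j\<in>{j. j \<noteq> 0}. FI ((\<lambda>j n. f_q j (eps n)) j n) (h n) \<le> e * rate h \<delta> n) sequentially"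
      by (rule FIgen[where M="\<lambda>n. 1" and C="\<lambda>n. 0" and Amul=1 and Acon=0])
         (use FT_f_q[OF en] n1 in auto)
    show "\<exists>B. \<forall>n x. \<bar>f_q j (eps n) x\<bar> \<le> B" for j by (rule exI[of _ 1]) (simp add: f_q_def)
    show "convergent (\<lambda>n. conv (f_q j (eps n)) (Kh K (h n)) x)" for j x
      using cq by (auto simp: convergent_def)
  qed
  have pN: "props K h \<delta> (\<lambda>t n. f_N (eps n) (H n) t) UNIV"
  proof (rule props_intro)
    show "nice (f_N (eps n) (H n) t)" for t n by (rule nice_f_N[OF en(1)])
    show "\<forall>e>0. eventually (\<lambda>n. \<forall>t\<in>UNIV. FI ((\<lambda>t n. f_N (eps n) (H n) t) t n) (h n) \<le> e * rate h \<delta> n) sequentially"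
      by (rule FIgen[where M="\<lambda>n. 2" and C="\<lambda>n. 0" and Amul=2 and Acon=0])
         (use FT_f_N[OF en(1)] n1 in auto)
    show "\<exists>B. \<forall>n x. \<bar>f_N (eps n) (H n) t x\<bar> \<le> B" for t by (rule exI[of _ 1]) (simp add: f_N_def g_N_def)
    show "convergent (\<lambda>n. conv (f_N (eps n) (H n) t) (Kh K (h n)) x)" for t x
      using cN by (auto simp: convergent_def)
  qed
  show ?thesis
    by (rule exI[of _ \<delta>]) (use d lim pl pg pq pN cl cg cq cN in blast)
qed


lemma part2_core:
  fixes K :: "real \<Rightarrow> real" and h eps H :: "nat \<Rightarrow> real" and theta_h C' \<eta> :: real
  assumes K_meas: "K \<in> borel_measurable borel"
    and K_sym: "\<forall>x. K (- x) = K x"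
    and K_int: "integrable lborel K" "(LINT x|lborel. K x) = 1"
    and K_FT: "closure {u. FT K u \<noteq> 0} \<subseteq> {-1..1}"
    and K_decay: "\<eta> > 2" "\<forall>x. \<bar>K x\<bar> \<le> C' * (1 + \<bar>x\<bar>) powr (- \<eta>)"
    and h_pos: "\<forall>n. h n > 0" and eps_pos: "\<forall>n. eps n > 0"
    and h_lim: "h \<longlonglongrightarrow> 0" and eps_lim: "eps \<longlonglongrightarrow> 0"
    and H_lim: "filterlim H at_top sequentially"
    and h_rate: "h \<in> \<Theta>(\<lambda>n. exp (- (real n powr theta_h)))" and theta_h: "theta_h < 1/4"
    and h_eps: "(\<lambda>n. h n / eps n) \<longlonglongrightarrow> 0"
    and h_H: "(\<lambda>n. h n * H n) \<longlonglongrightarrow> 0"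
    and eps_half: "\<forall>n. eps n < 1/2"
    and H_int: "\<forall>n. \<forall>j::int. \<bar>H n - of_int j\<bar> > eps n"
    and c: "c \<noteq> 0" and T: "finite T" and Ht: "filterlim Ht at_top sequentially"
    and Bc: "\<And>j. j \<noteq> 0 \<Longrightarrow> \<bar>Cj j\<bar> \<le> Bc" "Bc \<ge> 0"
    and q: "q \<ge> 0" "q < 1/2" "2 * theta_h + q < 1/2"
    and D: "eventually (\<lambda>n. (\<Sum>j\<in>{j::int. 0 < \<bar>j\<bar> \<and> of_int \<bar>j\<bar> \<le> Ht n}. \<bar>Cj j\<bar>) \<le> D * real n powr q) sequentially"
  shows "\<exists>\<delta>>0. (\<lambda>n. ln (1 / h n) / real n powr (1 / (1 + 2 * \<delta>))) \<longlonglongrightarrow> 0 \<and>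
           props K h \<delta> (\<lambda>(_::unit) n. f_comb c Cl Cg Cj T Ct (eps n) (H n) (h n) (Ht n)) UNIV \<and>
           (\<forall>x. (\<lambda>n. conv (f_comb c Cl Cg Cj T Ct (eps n) (H n) (h n) (Ht n)) (Kh K (h n)) x)
                 \<longlonglongrightarrow> Cl * indicator (- {0}) x
                     + infsum (\<lambda>j. Cj j * indicator {of_int j} x) (- {0})
                     + (\<Sum>t\<in>T. Ct t * l_lim t x))"
proof -
  interpret S: seqs h eps H using h_pos eps_pos h_lim eps_lim H_lim h_eps eps_half by unfold_locales auto
  have hn: "h n > 0" for n using h_pos by simp
  have en: "eps n > 0" "eps n < 1/2" for n using eps_pos eps_half by auto
  have "Bseq h" using h_lim by (intro convergent_imp_Bseq) (auto simp: convergent_def)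
  then obtain hmax where hmax0: "\<forall>n. norm (h n) \<le> hmax" by (rule BseqE) blast
  have hmax: "h n \<le> hmax" for n using hmax0[rule_format, of n] by simp
  define p where "p = max theta_h ((1/2 - q) / 8)"
  have p: "p > 0" "theta_h \<le> p" "2 * p + q < 1/2" using q by (auto simp: p_def max_def field_simps)
  obtain \<delta> where d: "\<delta> > 0" "p * (1 + (1 + 2 * \<delta>)) + q < 1/2" "p * (1 + 2 * \<delta>) < 1"
    using choose_delta[of p q] p q by blast
  have rho: "1 + 2 * \<delta> > 0" using d by simp
  have Lb: "eventually (\<lambda>n. ln (1 / h n) \<le> 2 * real n powr p) sequentially"
    by (rule Lbound[OF h_rate p(2) p(1) h_pos])
  have L0: "eventually (\<lambda>n. ln (1 / h n) \<ge> 0) sequentially"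
  proof -
    have "eventually (\<lambda>n. h n < 1) sequentially" using order_tendstoD(2)[OF h_lim, of 1] by simp
    then show ?thesis
    proof eventually_elim
      case (elim n) then show ?case using hn[of n] by (simp add: ln_div)
    qed
  qed
  have lim: "(\<lambda>n. ln (1 / h n) / real n powr (1 / (1 + 2 * \<delta>))) \<longlonglongrightarrow> 0"
    by (rule asym2[OF p(1) rho d(3) Lb L0])
  note FIgen = FI_ev[OF h_pos h_lim h_H H_lim Lb p(1) q(1) rho d(2)]
  define J where "J n = {j::int. 0 < \<bar>j\<bar> \<and> of_int \<bar>j\<bar> \<le> Ht n}" for n
  have Jfin: "finite (J n)" for n
  proof -
    have "J n \<subseteq> {-\<lceil>\<bar>Ht n\<bar>\<rceil>..\<lceil>\<bar>Ht n\<bar>\<rceil>}" unfolding J_def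
    proof
      fix j assume "j \<in> {j::int. 0 < \<bar>j\<bar> \<and> of_int \<bar>j\<bar> \<le> Ht n}"
      then have "of_int \<bar>j\<bar> \<le> \<bar>Ht n\<bar>" by auto
      then have "\<bar>j\<bar> \<le> \<lceil>\<bar>Ht n\<bar>\<rceil>" by (meson le_ceiling_iff order_trans le_of_int_ceiling of_int_le_iff)
      then show "j \<in> {-\<lceil>\<bar>Ht n\<bar>\<rceil>..\<lceil>\<bar>Ht n\<bar>\<rceil>}" by auto
    qed
    then show ?thesis by (rule finite_subset) simp
  qed
  have J0: "j \<in> J n \<Longrightarrow> j \<noteq> 0" for j n by (auto simp: J_def)
  define F where "F n = f_comb c Cl Cg Cj T Ct (eps n) (H n) (h n) (Ht n)" for n
  define fa where "fa n = (\<lambda>x. Cl * f_lambda (eps n) (H n) x)" for n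
  define fb where "fb n = (\<lambda>x. Cg * f_gamma c (h n) x)" for n
  define fc where "fc n = (\<lambda>x. \<Sum>j\<in>J n. Cj j * f_q j (eps n) x)" for n
  define fd where "fd n = (\<lambda>x. \<Sum>t\<in>T. Ct t * f_N (eps n) (H n) t x)" for n
  have Feq: "F n = (\<lambda>x. fa n x + fb n x + fc n x + fd n x)" for n
    by (simp add: F_def f_comb_def fa_def fb_def fc_def fd_def J_def fun_eq_iff)
  have na: "nice (fa n)" for n unfolding fa_def by (intro nice_cmult nice_f_lambda en)
  have nb: "nice (fb n)" for n unfolding fb_def by (intro nice_cmult nice_f_gamma c hn)
  have nc: "nice (fc n)" for n unfolding fc_def by (intro nice_sum Jfin nice_cmult nice_f_q)
  have nd: "nice (fd n)" for n unfolding fd_def by (intro nice_sum T nice_cmult nice_f_N en)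
  have nF: "nice (F n)" for n unfolding Feq by (intro nice_add na nb nc nd)
  define M where "M n = 2 * \<bar>Cl\<bar> + (\<Sum>j\<in>J n. \<bar>Cj j\<bar>) + 2 * (\<Sum>t\<in>T. \<bar>Ct t\<bar>)" for n
  define Cc where "Cc n = \<bar>Cg\<bar> * (2 / \<bar>c\<bar>) * (h n)\<^sup>2" for n
  have FTb: "cmod (FT (F n) u) \<le> M n * beta (\<bar>H n\<bar> + 1) u + Cc n" for n u
  proof -
    define b where "b = beta (\<bar>H n\<bar> + 1) u"
    have FTF: "FT (F n) u = FT (fa n) u + FT (fb n) u + FT (fc n) u + FT (fd n) u"
    proof -
      have "FT (F n) u = FT (\<lambda>x. (fa n x + fb n x + fc n x) + fd n x) u" unfolding Feq by simp
      also have "\<dots> = FT (\<lambda>x. fa n x + fb n x + fc n x) u + FT (fd n) u"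
        by (rule FT_add) (intro nice_add na nb nc, rule nd)
      also have "FT (\<lambda>x. fa n x + fb n x + fc n x) u = FT (\<lambda>x. fa n x + fb n x) u + FT (fc n) u"
        by (rule FT_add) (intro nice_add na nb, rule nc)
      also have "FT (\<lambda>x. fa n x + fb n x) u = FT (fa n) u + FT (fb n) u"
        by (rule FT_add) (rule na, rule nb)
      finally show ?thesis .
    qed
    have a: "cmod (FT (fa n) u) \<le> \<bar>Cl\<bar> * (2 * b)"
      unfolding fa_def FT_cmult b_def using FT_f_lambda[OF en(1)[of n], where H="H n" and u=u]
      by (simp add: norm_mult mult_left_mono)
    have bb: "cmod (FT (fb n) u) \<le> Cc n"
    proof -
      have "cmod (FT (fb n) u) = \<bar>Cg\<bar> * cmod (FT (f_gamma c (h n)) u)" unfolding fb_def FT_cmult by (simp add: norm_mult)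
      also have "\<dots> \<le> \<bar>Cg\<bar> * (2 * (h n / \<bar>c\<bar>) * h n)" by (intro mult_left_mono FT_f_gamma c hn) simp
      also have "\<dots> = Cc n" unfolding Cc_def by (simp add: power2_eq_square)
      finally show ?thesis .
    qed
    have cc: "cmod (FT (fc n) u) \<le> (\<Sum>j\<in>J n. \<bar>Cj j\<bar>) * b"
    proof -
      have "FT (fc n) u = (\<Sum>j\<in>J n. FT (\<lambda>x. Cj j * f_q j (eps n) x) u)"
        unfolding fc_def by (rule FT_sum[OF Jfin]) (intro nice_cmult nice_f_q)
      also have "\<dots> = (\<Sum>j\<in>J n. complex_of_real (Cj j) * FT (f_q j (eps n)) u)" by (simp add: FT_cmult)
      finally have "cmod (FT (fc n) u) \<le> (\<Sum>j\<in>J n. cmod (complex_of_real (Cj j) * FT (f_q j (eps n)) u))"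
        by (simp add: norm_sum)
      also have "\<dots> \<le> (\<Sum>j\<in>J n. \<bar>Cj j\<bar> * b)"
        by (intro sum_mono) (use FT_f_q[OF en(1)[of n] en(2)[of n], where H="H n" and u=u] in \<open>simp add: norm_mult mult_left_mono b_def\<close>)
      also have "\<dots> = (\<Sum>j\<in>J n. \<bar>Cj j\<bar>) * b" by (simp add: sum_distrib_right)
      finally show ?thesis .
    qed
    have dd: "cmod (FT (fd n) u) \<le> (\<Sum>t\<in>T. \<bar>Ct t\<bar>) * (2 * b)"
    proof -
      have "FT (fd n) u = (\<Sum>t\<in>T. FT (\<lambda>x. Ct t * f_N (eps n) (H n) t x) u)"
        unfolding fd_def by (rule FT_sum[OF T]) (intro nice_cmult nice_f_N en)
      also have "\<dots> = (\<Sum>t\<in>T. complex_of_real (Ct t) * FT (f_N (eps n) (H n) t) u)" by (simp add: FT_cmult)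
      finally have "cmod (FT (fd n) u) \<le> (\<Sum>t\<in>T. cmod (complex_of_real (Ct t) * FT (f_N (eps n) (H n) t) u))"
        by (simp add: norm_sum)
      also have "\<dots> \<le> (\<Sum>t\<in>T. \<bar>Ct t\<bar> * (2 * b))"
        by (intro sum_mono) (use FT_f_N[OF en(1)[of n], where H="H n" and u=u] in \<open>simp add: norm_mult mult_left_mono b_def\<close>)
      also have "\<dots> = (\<Sum>t\<in>T. \<bar>Ct t\<bar>) * (2 * b)" by (simp add: sum_distrib_right)
      finally show ?thesis .
    qed
    have "cmod (FT (F n) u) \<le> cmod (FT (fa n) u) + cmod (FT (fb n) u) + cmod (FT (fc n) u) + cmod (FT (fd n) u)"
      unfolding FTF by (meson add_mono norm_triangle_ineq order_trans order_refl)
    also have "\<dots> \<le> \<bar>Cl\<bar> * (2 * b) + Cc n + (\<Sum>j\<in>J n. \<bar>Cj j\<bar>) * b + (\<Sum>t\<in>T. \<bar>Ct t\<bar>) * (2 * b)"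
      using a bb cc dd by linarith
    also have "\<dots> = M n * b + Cc n" unfolding M_def by (simp add: algebra_simps)
    finally show ?thesis unfolding b_def .
  qed
  have M0: "\<forall>n. 0 \<le> M n" unfolding M_def by (auto intro!: add_nonneg_nonneg sum_nonneg)
  define Amul where "Amul = 2 * \<bar>Cl\<bar> + 2 * (\<Sum>t\<in>T. \<bar>Ct t\<bar>) + \<bar>D\<bar>"
  have Amul: "Amul \<ge> 0" unfolding Amul_def by (auto intro!: add_nonneg_nonneg sum_nonneg)
  have Mb: "eventually (\<lambda>n. M n \<le> Amul * real n powr q) sequentially"
    using D eventually_ge_at_top[of 1]
  proof eventually_elim
    case (elim n)
    have nq: "real n powr q \<ge> 1" using elim q by (simp add: ge_one_powr_ge_zero)
    have "M n \<le> 2 * \<bar>Cl\<bar> + 2 * (\<Sum>t\<in>T. \<bar>Ct t\<bar>) + \<bar>D\<bar> * real n powr q"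
      using elim(1) unfolding M_def J_def by (smt (verit) abs_ge_self mult_right_mono powr_ge_zero)
    also have "\<dots> \<le> Amul * real n powr q"
    proof -
      have s: "0 \<le> 2 * \<bar>Cl\<bar> + 2 * (\<Sum>t\<in>T. \<bar>Ct t\<bar>)" by (auto intro!: add_nonneg_nonneg sum_nonneg)
      have "2 * \<bar>Cl\<bar> + 2 * (\<Sum>t\<in>T. \<bar>Ct t\<bar>) \<le> (2 * \<bar>Cl\<bar> + 2 * (\<Sum>t\<in>T. \<bar>Ct t\<bar>)) * real n powr q"
        using mult_left_mono[OF nq s] by simp
      then show ?thesis unfolding Amul_def by (simp add: algebra_simps)
    qed
    finally show ?case .
  qed
  have Fb: "\<bar>F n x\<bar> \<le> \<bar>Cl\<bar> + \<bar>Cg\<bar> * (hmax / \<bar>c\<bar>) + Bc + (\<Sum>t\<in>T. \<bar>Ct t\<bar>)" for n x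
  proof -
    have a: "\<bar>fa n x\<bar> \<le> \<bar>Cl\<bar>" unfolding fa_def by (simp add: f_lambda_def)
    have b: "\<bar>fb n x\<bar> \<le> \<bar>Cg\<bar> * (hmax / \<bar>c\<bar>)"
    proof -
      have "\<bar>f_gamma c (h n) x\<bar> \<le> (h n / \<bar>c\<bar>) * indicator {-h n..h n} x" by (rule f_gamma_bound[OF c hn])
      also have "\<dots> \<le> h n / \<bar>c\<bar>" using hn[of n] by (simp add: indicator_def)
      also have "\<dots> \<le> hmax / \<bar>c\<bar>" using hmax[of n] by (simp add: divide_right_mono)
      finally have g: "\<bar>f_gamma c (h n) x\<bar> \<le> hmax / \<bar>c\<bar>" .
      have "\<bar>Cg\<bar> * \<bar>f_gamma c (h n) x\<bar> \<le> \<bar>Cg\<bar> * (hmax / \<bar>c\<bar>)" by (rule mult_left_mono[OF g]) simp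
      then show ?thesis unfolding fb_def by (simp only: abs_mult)
    qed
    have cq: "\<bar>fc n x\<bar> \<le> Bc"
      unfolding fc_def Qsum[OF Jfin en(2)] using Bc J0 by auto
    have d: "\<bar>fd n x\<bar> \<le> (\<Sum>t\<in>T. \<bar>Ct t\<bar>)"
    proof -
      have "\<bar>fd n x\<bar> \<le> (\<Sum>t\<in>T. \<bar>Ct t * f_N (eps n) (H n) t x\<bar>)" unfolding fd_def by (rule sum_abs)
      also have "\<dots> \<le> (\<Sum>t\<in>T. \<bar>Ct t\<bar>)"
        by (intro sum_mono) (simp add: abs_mult f_N_def g_N_def)
      finally show ?thesis .
    qed
    show ?thesis unfolding Feq using a b cq d by linarith
  qed
  define A where "A x s = Cl * indicator (- {0}) x + Cg * 0 + Vq Cj x + (\<Sum>t\<in>T. Ct t * Nlim t s x)" for x s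
  have limF: "(\<lambda>n. F n (x - h n * z)) \<longlonglongrightarrow> A x s" if z: "z \<noteq> 0" and s: "(z < 0) = (s < (0::real))" for x z s
  proof -
    have "(\<lambda>n. fa n (x - h n * z) + fb n (x - h n * z) + fc n (x - h n * z) + fd n (x - h n * z))
        \<longlonglongrightarrow> Cl * indicator (- {0}) x + Cg * 0 + Vq Cj x + (\<Sum>t\<in>T. Ct t * Nlim t z x)"
      unfolding fa_def fb_def fc_def fd_def J_def
      by (intro tendsto_add tendsto_mult_left S.lim_lambda S.lim_gamma c S.lim_Q Ht tendsto_sum S.lim_N z)
    moreover have "Nlim t z x = Nlim t s x" for t using s by (simp add: Nlim_def)
    ultimately show ?thesis unfolding Feq A_def by simp
  qed
  have convF: "(\<lambda>n. conv (F n) (Kh K (h n)) x) \<longlonglongrightarrow> Cl * indicator (- {0}) x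
                     + infsum (\<lambda>j. Cj j * indicator {of_int j} x) (- {0})
                     + (\<Sum>t\<in>T. Ct t * l_lim t x)" for x
  proof -
    have "(\<lambda>n. conv (F n) (Kh K (h n)) x) \<longlonglongrightarrow> (A x 1 + A x (-1)) / 2"
      by (rule conv_DCT[OF K_int(1) K_sym K_int(2) h_pos nice_meas[OF nF] Fb]) (auto intro!: limF)
    moreover have "(A x 1 + A x (-1)) / 2 = Cl * indicator (- {0}) x
                     + infsum (\<lambda>j. Cj j * indicator {of_int j} x) (- {0})
                     + (\<Sum>t\<in>T. Ct t * l_lim t x)"
    proof -
      have "(\<Sum>t\<in>T. Ct t * Nlim t 1 x) + (\<Sum>t\<in>T. Ct t * Nlim t (-1) x) = (\<Sum>t\<in>T. Ct t * (Nlim t 1 x + Nlim t (-1) x))"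
        by (simp add: sum.distrib[symmetric] distrib_left)
      also have "\<dots> = (\<Sum>t\<in>T. Ct t * l_lim t x * 2)"
        by (intro sum.cong refl) (simp add: Nlim_avg[symmetric])
      also have "\<dots> = (\<Sum>t\<in>T. Ct t * l_lim t x) * 2" by (simp add: sum_distrib_right)
      finally have "(\<Sum>t\<in>T. Ct t * Nlim t 1 x) + (\<Sum>t\<in>T. Ct t * Nlim t (-1) x) = (\<Sum>t\<in>T. Ct t * l_lim t x) * 2" .
      then show ?thesis unfolding A_def Vq_infsum by (simp add: field_simps)
    qed
    ultimately show ?thesis by simp
  qed
  have pF: "props K h \<delta> (\<lambda>(_::unit) n. F n) UNIV"
  proof (rule props_intro)
    show "nice (F n)" for n by (rule nF)
    show "\<forall>e>0. eventually (\<lambda>n. \<forall>i\<in>UNIV. FI ((\<lambda>(_::unit) n. F n) i n) (h n) \<le> e * rate h \<delta> n) sequentially"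
    proof (rule FIgen[where M=M and C=Cc and Amul=Amul and Acon="\<bar>Cg\<bar> * (2 / \<bar>c\<bar>)"])
      show "eventually (\<lambda>n. \<forall>i\<in>UNIV. \<forall>u\<in>{-(1/h n)..1/h n}. cmod (FT ((\<lambda>(_::unit) n. F n) i n) u)
          \<le> M n * beta (\<bar>H n\<bar> + 1) u + Cc n) sequentially"
        using FTb by simp
      show "\<forall>n. 0 \<le> Cc n" unfolding Cc_def by simp
      show "\<forall>n. Cc n \<le> \<bar>Cg\<bar> * (2 / \<bar>c\<bar>) * (h n)\<^sup>2" unfolding Cc_def by simp
    qed (use M0 Mb Amul in auto)
    show "\<exists>B. \<forall>n x. \<bar>F n x\<bar> \<le> B" using Fb by blast
    show "convergent (\<lambda>n. conv (F n) (Kh K (h n)) x)" for x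
      using convF by (auto simp: convergent_def)
  qed
  show ?thesis
    by (rule exI[of _ \<delta>]) (use d lim pF convF in \<open>simp add: F_def\<close>)
qed


lemma part2:
  fixes K :: "real \<Rightarrow> real" and h eps H :: "nat \<Rightarrow> real" and theta_h C' \<eta> :: real
  assumes K_meas: "K \<in> borel_measurable borel"
    and K_sym: "\<forall>x. K (- x) = K x"
    and K_int: "integrable lborel K" "(LINT x|lborel. K x) = 1"
    and K_FT: "closure {u. FT K u \<noteq> 0} \<subseteq> {-1..1}"
    and K_decay: "\<eta> > 2" "\<forall>x. \<bar>K x\<bar> \<le> C' * (1 + \<bar>x\<bar>) powr (- \<eta>)"
    and h_pos: "\<forall>n. h n > 0" and eps_pos: "\<forall>n. eps n > 0"
    and h_lim: "h \<longlonglongrightarrow> 0" and eps_lim: "eps \<longlonglongrightarrow> 0"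
    and H_lim: "filterlim H at_top sequentially"
    and h_rate: "h \<in> \<Theta>(\<lambda>n. exp (- (real n powr theta_h)))" and theta_h: "theta_h < 1/4"
    and h_eps: "(\<lambda>n. h n / eps n) \<longlonglongrightarrow> 0"
    and h_H: "(\<lambda>n. h n * H n) \<longlonglongrightarrow> 0"
    and eps_half: "\<forall>n. eps n < 1/2"
    and H_int: "\<forall>n. \<forall>j::int. \<bar>H n - of_int j\<bar> > eps n"
  shows "(\<forall>c Cl Cg (Cj :: int \<Rightarrow> real) T Ct (Ht :: nat \<Rightarrow> real).
        c \<noteq> 0 \<and> finite T \<and> filterlim Ht at_top sequentially \<and>
        (finite {j. j \<noteq> 0 \<and> Cj j \<noteq> 0} \<or>
         (\<exists>theta_H. (\<exists>B. \<forall>j. j \<noteq> 0 \<longrightarrow> \<bar>Cj j\<bar> \<le> B) \<and> Ht \<in> \<Theta>(\<lambda>n. real n powr theta_H) \<and>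
               theta_H < 1/2 \<and> theta_h < (1 - 2 * theta_H) / 4))
        \<longrightarrow>
        (\<exists>\<delta>>0. (\<lambda>n. ln (1 / h n) / real n powr (1 / (1 + 2 * \<delta>))) \<longlonglongrightarrow> 0 \<and>
           props K h \<delta> (\<lambda>(_::unit) n. f_comb c Cl Cg Cj T Ct (eps n) (H n) (h n) (Ht n)) UNIV \<and>
           (\<forall>x. (\<lambda>n. conv (f_comb c Cl Cg Cj T Ct (eps n) (H n) (h n) (Ht n)) (Kh K (h n)) x)
                 \<longlonglongrightarrow> Cl * indicator (- {0}) x
                     + infsum (\<lambda>j. Cj j * indicator {of_int j} x) (- {0})
                     + (\<Sum>t\<in>T. Ct t * l_lim t x))))"

proof (intro allI impI)
  fix c Cl Cg :: real and Cj :: "int \<Rightarrow> real" and T :: "real set" and Ct :: "real \<Rightarrow> real" and Ht :: "nat \<Rightarrow> real"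
  assume A: "c \<noteq> 0 \<and> finite T \<and> filterlim Ht at_top sequentially \<and>
        (finite {j. j \<noteq> 0 \<and> Cj j \<noteq> 0} \<or>
         (\<exists>theta_H. (\<exists>B. \<forall>j. j \<noteq> 0 \<longrightarrow> \<bar>Cj j\<bar> \<le> B) \<and> Ht \<in> \<Theta>(\<lambda>n. real n powr theta_H) \<and>
               theta_H < 1/2 \<and> theta_h < (1 - 2 * theta_H) / 4))"
  have c: "c \<noteq> 0" and T: "finite T" and Ht: "filterlim Ht at_top sequentially" using A by auto
  define J where "J n = {j::int. 0 < \<bar>j\<bar> \<and> of_int \<bar>j\<bar> \<le> Ht n}" for n
  have Jfin: "finite (J n)" for n
  proof -
    have "J n \<subseteq> {-\<lceil>\<bar>Ht n\<bar>\<rceil>..\<lceil>\<bar>Ht n\<bar>\<rceil>}" unfolding J_def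
    proof
      fix j assume "j \<in> {j::int. 0 < \<bar>j\<bar> \<and> of_int \<bar>j\<bar> \<le> Ht n}"
      then have "of_int \<bar>j\<bar> \<le> \<bar>Ht n\<bar>" by auto
      then have "\<bar>j\<bar> \<le> \<lceil>\<bar>Ht n\<bar>\<rceil>" by (meson le_ceiling_iff order_trans le_of_int_ceiling of_int_le_iff)
      then show "j \<in> {-\<lceil>\<bar>Ht n\<bar>\<rceil>..\<lceil>\<bar>Ht n\<bar>\<rceil>}" by auto
    qed
    then show ?thesis by (rule finite_subset) simp
  qed
  note core = part2_core[OF K_meas K_sym K_int K_FT K_decay h_pos eps_pos h_lim eps_lim H_lim h_rate theta_h h_eps h_H eps_half H_int]
  have dis: "finite {j. j \<noteq> 0 \<and> Cj j \<noteq> 0} \<or>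
         (\<exists>theta_H. (\<exists>B. \<forall>j. j \<noteq> 0 \<longrightarrow> \<bar>Cj j\<bar> \<le> B) \<and> Ht \<in> \<Theta>(\<lambda>n. real n powr theta_H) \<and>
               theta_H < 1/2 \<and> theta_h < (1 - 2 * theta_H) / 4)" using A by (elim conjE)
  consider (a) "finite {j. j \<noteq> 0 \<and> Cj j \<noteq> 0}"
    | (b) theta_H B where "\<forall>j. j \<noteq> 0 \<longrightarrow> \<bar>Cj j\<bar> \<le> B" "Ht \<in> \<Theta>(\<lambda>n. real n powr theta_H)"
        "theta_H < 1/2" "theta_h < (1 - 2 * theta_H) / 4"
    using dis by (elim disjE exE conjE) (assumption, assumption)
  then show "\<exists>\<delta>>0. (\<lambda>n. ln (1 / h n) / real n powr (1 / (1 + 2 * \<delta>))) \<longlonglongrightarrow> 0 \<and>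
           props K h \<delta> (\<lambda>(_::unit) n. f_comb c Cl Cg Cj T Ct (eps n) (H n) (h n) (Ht n)) UNIV \<and>
           (\<forall>x. (\<lambda>n. conv (f_comb c Cl Cg Cj T Ct (eps n) (H n) (h n) (Ht n)) (Kh K (h n)) x)
                 \<longlonglongrightarrow> Cl * indicator (- {0}) x
                     + infsum (\<lambda>j. Cj j * indicator {of_int j} x) (- {0})
                     + (\<Sum>t\<in>T. Ct t * l_lim t x))"
  proof cases
    case a
    define S where "S = {j. j \<noteq> 0 \<and> Cj j \<noteq> 0}"
    have Sfin: "finite S" using a by (simp add: S_def)
    define Bc where "Bc = (\<Sum>j\<in>S. \<bar>Cj j\<bar>)"
    have Bc0: "Bc \<ge> 0" unfolding Bc_def by (simp add: sum_nonneg)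
    have Bc: "\<bar>Cj j\<bar> \<le> Bc" if "j \<noteq> 0" for j
    proof (cases "Cj j = 0")
      case True then show ?thesis using Bc0 by simp
    next
      case False
      then have "j \<in> S" using that by (simp add: S_def)
      then show ?thesis unfolding Bc_def by (rule member_le_sum) (auto simp: Sfin)
    qed
    have D: "eventually (\<lambda>n. (\<Sum>j\<in>{j::int. 0 < \<bar>j\<bar> \<and> of_int \<bar>j\<bar> \<le> Ht n}. \<bar>Cj j\<bar>) \<le> Bc * real n powr 0) sequentially"
      using eventually_ge_at_top[of 1]
    proof eventually_elim
      case (elim n)
      have "(\<Sum>j\<in>J n. \<bar>Cj j\<bar>) = (\<Sum>j\<in>J n \<inter> S. \<bar>Cj j\<bar>)"
        by (rule sum.mono_neutral_right[OF Jfin]) (auto simp: S_def J_def)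
      also have "\<dots> \<le> (\<Sum>j\<in>S. \<bar>Cj j\<bar>)" by (rule sum_mono2[OF Sfin]) auto
      finally show ?case using elim unfolding J_def Bc_def by simp
    qed
    show ?thesis by (rule core[OF c T Ht Bc Bc0 _ _ _ D]) (use theta_h in auto)
  next
    case b
    define q where "q = max theta_H 0"
    define Bc where "Bc = max B 0"
    have Bc0: "Bc \<ge> 0" unfolding Bc_def by simp
    have Bc: "\<bar>Cj j\<bar> \<le> Bc" if "j \<noteq> 0" for j using b(1) that unfolding Bc_def by force
    have "Ht \<in> O(\<lambda>n. real n powr theta_H)" using b(2) by blast
    then obtain cc where cc: "cc > 0" and evc: "eventually (\<lambda>n. norm (Ht n) \<le> cc * norm (real n powr theta_H)) sequentially"
      by (elim landau_o.bigE) auto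
    have D: "eventually (\<lambda>n. (\<Sum>j\<in>{j::int. 0 < \<bar>j\<bar> \<and> of_int \<bar>j\<bar> \<le> Ht n}. \<bar>Cj j\<bar>) \<le> (Bc * (2 * cc + 1)) * real n powr q) sequentially"
      using evc eventually_ge_at_top[of 1]
    proof eventually_elim
      case (elim n)
      have n1: "real n \<ge> 1" using elim by simp
      have nq: "real n powr q \<ge> 1" using n1 by (simp add: q_def ge_one_powr_ge_zero)
      have nt: "real n powr theta_H \<le> real n powr q" using n1 by (intro powr_mono) (auto simp: q_def)
      define k where "k = \<lfloor>\<bar>Ht n\<bar>\<rfloor>"
      have sub: "J n \<subseteq> {-k..k}" unfolding J_def k_def
      proof
        fix j assume "j \<in> {j::int. 0 < \<bar>j\<bar> \<and> of_int \<bar>j\<bar> \<le> Ht n}"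
        then have "of_int \<bar>j\<bar> \<le> \<bar>Ht n\<bar>" by auto
        then have "\<bar>j\<bar> \<le> \<lfloor>\<bar>Ht n\<bar>\<rfloor>" by (simp add: le_floor_iff)
        then show "j \<in> {-\<lfloor>\<bar>Ht n\<bar>\<rfloor>..\<lfloor>\<bar>Ht n\<bar>\<rfloor>}" by auto
      qed
      have k0: "k \<ge> 0" unfolding k_def by simp
      have "card (J n) \<le> card {-k..k}" by (rule card_mono) (use sub in auto)
      also have "card {-k..k} = nat (2 * k + 1)" by simp
      finally have "real (card (J n)) \<le> real (nat (2 * k + 1))" by linarith
      also have "\<dots> = 2 * of_int k + 1" using k0 by simp
      also have "\<dots> \<le> 2 * \<bar>Ht n\<bar> + 1" unfolding k_def by simp
      finally have card: "real (card (J n)) \<le> 2 * \<bar>Ht n\<bar> + 1" .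
      have "(\<Sum>j\<in>J n. \<bar>Cj j\<bar>) \<le> of_nat (card (J n)) * Bc"
        by (rule sum_bounded_above) (use Bc in \<open>auto simp: J_def\<close>)
      also have "\<dots> \<le> (2 * \<bar>Ht n\<bar> + 1) * Bc" by (rule mult_right_mono[OF card Bc0])
      also have "\<dots> \<le> (2 * (cc * real n powr q) + 1) * Bc"
      proof -
        have "\<bar>Ht n\<bar> \<le> cc * real n powr theta_H" using elim by simp
        also have "\<dots> \<le> cc * real n powr q" using nt cc by simp
        finally show ?thesis using Bc0 by (intro mult_right_mono) auto
      qed
      also have "\<dots> \<le> (Bc * (2 * cc + 1)) * real n powr q"
      proof -
        have "Bc * 1 \<le> Bc * real n powr q" using nq Bc0 by (intro mult_left_mono) auto
        then show ?thesis by (simp add: algebra_simps)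
      qed
      finally show ?case unfolding J_def .
    qed
    have q0: "q \<ge> 0" "q < 1/2" using b(3) by (auto simp: q_def)
    have q2: "2 * theta_h + q < 1/2"
    proof (cases "theta_H \<ge> 0")
      case True then show ?thesis using b(4) by (simp add: q_def field_simps)
    next
      case False then show ?thesis using theta_h by (simp add: q_def)
    qed
    show ?thesis by (rule core[OF c T Ht Bc Bc0 q0 q2 D])
  qed
qed


theorem lemma3p7:
  fixes K :: "real \<Rightarrow> real" and h eps H :: "nat \<Rightarrow> real" and theta_h C' \<eta> :: real
  assumes K_meas: "K \<in> borel_measurable borel"
    and K_sym: "\<forall>x. K (- x) = K x"
    and K_int: "integrable lborel K" "(LINT x|lborel. K x) = 1"
    and K_FT: "closure {u. FT K u \<noteq> 0} \<subseteq> {-1..1}"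
    and K_decay: "\<eta> > 2" "\<forall>x. \<bar>K x\<bar> \<le> C' * (1 + \<bar>x\<bar>) powr (- \<eta>)"
    and h_pos: "\<forall>n. h n > 0" and eps_pos: "\<forall>n. eps n > 0"
    and h_lim: "h \<longlonglongrightarrow> 0" and eps_lim: "eps \<longlonglongrightarrow> 0"
    and H_lim: "filterlim H at_top sequentially"
    and h_rate: "h \<in> \<Theta>(\<lambda>n. exp (- (real n powr theta_h)))" and theta_h: "theta_h < 1/4"
    and h_eps: "(\<lambda>n. h n / eps n) \<longlonglongrightarrow> 0"
    and h_H: "(\<lambda>n. h n * H n) \<longlonglongrightarrow> 0"
    and eps_half: "\<forall>n. eps n < 1/2"
    and H_int: "\<forall>n. \<forall>j::int. \<bar>H n - of_int j\<bar> > eps n"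
  shows
    "(\<exists>\<delta>>0. (\<lambda>n. ln (1 / h n) / real n powr (1 / (1 + 2 * \<delta>))) \<longlonglongrightarrow> 0 \<and>
       props K h \<delta> (\<lambda>(_::unit) n. f_lambda (eps n) (H n)) UNIV \<and>
       (\<forall>c. c \<noteq> 0 \<longrightarrow> props K h \<delta> (\<lambda>(_::unit) n. f_gamma c (h n)) UNIV) \<and>
       props K h \<delta> (\<lambda>j n. f_q j (eps n)) {j. j \<noteq> 0} \<and>
       props K h \<delta> (\<lambda>t n. f_N (eps n) (H n) t) UNIV \<and>
       (\<forall>x. (\<lambda>n. conv (f_lambda (eps n) (H n)) (Kh K (h n)) x) \<longlonglongrightarrow> indicator (- {0}) x) \<and>
       (\<forall>c x. c \<noteq> 0 \<longrightarrow> (\<lambda>n. conv (f_gamma c (h n)) (Kh K (h n)) x) \<longlonglongrightarrow> 0) \<and>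
       (\<forall>j x. (\<lambda>n. conv (f_q j (eps n)) (Kh K (h n)) x) \<longlonglongrightarrow> indicator {of_int j} x) \<and>
       (\<forall>t x. (\<lambda>n. conv (f_N (eps n) (H n) t) (Kh K (h n)) x) \<longlonglongrightarrow> l_lim t x))
     \<and>
     (\<forall>c Cl Cg (Cj :: int \<Rightarrow> real) T Ct (Ht :: nat \<Rightarrow> real).
        c \<noteq> 0 \<and> finite T \<and> filterlim Ht at_top sequentially \<and>
        (finite {j. j \<noteq> 0 \<and> Cj j \<noteq> 0} \<or>
         (\<exists>theta_H. (\<exists>B. \<forall>j. j \<noteq> 0 \<longrightarrow> \<bar>Cj j\<bar> \<le> B) \<and> Ht \<in> \<Theta>(\<lambda>n. real n powr theta_H) \<and>
               theta_H < 1/2 \<and> theta_h < (1 - 2 * theta_H) / 4))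
        \<longrightarrow>
        (\<exists>\<delta>>0. (\<lambda>n. ln (1 / h n) / real n powr (1 / (1 + 2 * \<delta>))) \<longlonglongrightarrow> 0 \<and>
           props K h \<delta> (\<lambda>(_::unit) n. f_comb c Cl Cg Cj T Ct (eps n) (H n) (h n) (Ht n)) UNIV \<and>
           (\<forall>x. (\<lambda>n. conv (f_comb c Cl Cg Cj T Ct (eps n) (H n) (h n) (Ht n)) (Kh K (h n)) x)
                 \<longlonglongrightarrow> Cl * indicator (- {0}) x
                     + infsum (\<lambda>j. Cj j * indicator {of_int j} x) (- {0})
                     + (\<Sum>t\<in>T. Ct t * l_lim t x))))"
  using part1[OF K_meas K_sym K_int K_FT K_decay h_pos eps_pos h_lim eps_lim H_lim h_rate theta_h h_eps h_H eps_half H_int] part2[OF K_meas K_sym K_int K_FT K_decay h_pos eps_pos h_lim eps_lim H_lim h_rate theta_h h_eps h_H eps_half H_int] by (rule conjI)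

end
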